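(* Let $\theta,\omega\in H^\infty$ be inner functions with $\theta(0)=0$ and $\omega(0)=0$, and let $g\in H^2$ be a multiplier between $\mathcal K_\theta$ and $\mathcal K_\omega$. Let $g_1\in H^2$ be the function with $g=\omega\overline\theta\,\overline{g_1}$ a.e. on $\mathbb T$, and let $X\in\mathcal L(\mathcal K_\theta,\mathcal K_\omega)$ be $Xf=gf$, $f\in\mathcal K_\theta$. Suppose $g_1(0)\neq0$. Let $c\in\mathbb T$ and put $$u=\omega+\frac{1}{\overline{g_1(0)}}(c-\theta)g .$$ Then $u\in\mathcal K_\omega$, and with $T=S_\omega+(\cdot,\overline\chi\omega)u$ we have $XU_{(\theta)c}=TX$.
   Context: $m$ is normalized Lebesgue measure on $\mathbb T$; $H^2$ is the Hardy space of $\mathbb D$, identified with a subspace of $L^2(m)$ via boundary values, with the $L^2(m)$ inner product. $\chi(z)=z$, $\mathbf 1(z)=1$. For inner $\theta$, $\mathcal K_\theta=H^2\ominus\theta H^2$; $S$ is multiplication by $\chi$ on $H^2$ and $S_\theta=P_{\mathcal K_\theta}S|_{\mathcal K_\theta}$. $\overline\chi\theta$ is the function $\zeta\mapsto\overline\zeta\theta(\zeta)$ on $\mathbb T$ (in $\mathcal K_\theta$ when $\theta(0)=0$). $(\cdot,v)u$ is the operator $f\mapsto(f,v)u$. For $\theta(0)=0$, $c\in\mathbb T$: $U_{(\theta)c}=S_\theta+c(\cdot,\overline\chi\theta)\mathbf 1\in\mathcal L(\mathcal K_\theta)$. A function $g\in H^2$ is a multiplier between $\mathcal K_\theta$ and $\mathcal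 K_\omega$ if $gf\in\mathcal K_\omega$ for every $f\in\mathcal K_\theta$ (then $f\mapsto gf$ is bounded, and there exists $g_1\in H^2$ with $g=\omega\overline\theta\,\overline{g_1}$ a.e. on $\mathbb T$). *)

theory Defs
  imports "HOL-Analysis.Analysis"
begin

text \<open>Functions on the unit circle are modelled as functions complex => complex,
  of which only the values on the circle matter; the circle is parametrised by
  t \<mapsto> cis t, t in [0, 2 pi], and the normalised Lebesgue measure m corresponds to
  Lebesgue measure on [0, 2 pi] divided by 2 pi.  Boundary values of H^2 functions
  are identified with the H^2 functions themselves.\<close>

definition circ_ae :: "(complex \<Rightarrow> bool) \<Rightarrow> bool" where
  "circ_ae P \<longleftrightarrow> (AE t in lebesgue. t \<in> {0..2*pi} \<longrightarrow> P (cis t))"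

definition aeq :: "(complex \<Rightarrow> complex) \<Rightarrow> (complex \<Rightarrow> complex) \<Rightarrow> bool" where
  "aeq f g \<longleftrightarrow> circ_ae (\<lambda>z. f z = g z)"

definition L2T :: "(complex \<Rightarrow> complex) \<Rightarrow> bool" where
  "L2T f \<longleftrightarrow> (\<lambda>t. f (cis t)) \<in> borel_measurable lebesgue \<and>
     set_integrable lebesgue {0..2*pi} (\<lambda>t. (cmod (f (cis t)))^2)"

definition ipL2 :: "(complex \<Rightarrow> complex) \<Rightarrow> (complex \<Rightarrow> complex) \<Rightarrow> complex" where
  "ipL2 f g = (LINT t:{0..2*pi}|lebesgue. f (cis t) * cnj (g (cis t))) / (2 * pi)"

definition fourier_coeff :: "(complex \<Rightarrow> complex) \<Rightarrow> int \<Rightarrow> complex" where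
  "fourier_coeff f n = ipL2 f (\<lambda>z. z powi n)"

definition H2 :: "(complex \<Rightarrow> complex) set" where
  "H2 = {f. L2T f \<and> (\<forall>n<0. fourier_coeff f n = 0)}"

definition Hinf :: "(complex \<Rightarrow> complex) set" where
  "Hinf = {f \<in> H2. \<exists>M. circ_ae (\<lambda>z. cmod (f z) \<le> M)}"

text \<open>Value at 0 of (the analytic extension of) an H^2 function.\<close>
definition val0 :: "(complex \<Rightarrow> complex) \<Rightarrow> complex" where
  "val0 f = fourier_coeff f 0"

definition inner_fun :: "(complex \<Rightarrow> complex) \<Rightarrow> bool" where
  "inner_fun \<theta> \<longleftrightarrow> \<theta> \<in> Hinf \<and> circ_ae (\<lambda>z. cmod (\<theta> z) = 1)"

definition Kmod :: "(complex \<Rightarrow> complex) \<Rightarrow> (complex \<Rightarrow> complex) set" where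
  "Kmod \<theta> = {f \<in> H2. \<forall>h\<in>H2. ipL2 f (\<lambda>z. \<theta> z * h z) = 0}"

text \<open>Orthogonal projection onto K_theta (a representative of the a.e. class).\<close>
definition PK :: "(complex \<Rightarrow> complex) \<Rightarrow> (complex \<Rightarrow> complex) \<Rightarrow> (complex \<Rightarrow> complex)" where
  "PK \<theta> f = (SOME p. p \<in> Kmod \<theta> \<and> (\<forall>k\<in>Kmod \<theta>. ipL2 (\<lambda>z. f z - p z) k = 0))"

definition Sc :: "(complex \<Rightarrow> complex) \<Rightarrow> (complex \<Rightarrow> complex) \<Rightarrow> (complex \<Rightarrow> complex)" where
  "Sc \<theta> f = PK \<theta> (\<lambda>z. z * f z)"

definition Uc :: "(complex \<Rightarrow> complex) \<Rightarrow> complex \<Rightarrow> (complex \<Rightarrow> complex) \<Rightarrow> (complex \<Rightarrow> complex)" where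
  "Uc \<theta> c f = (\<lambda>z. Sc \<theta> f z + c * ipL2 f (\<lambda>w. cnj w * \<theta> w))"

definition multiplier :: "(complex \<Rightarrow> complex) \<Rightarrow> (complex \<Rightarrow> complex) \<Rightarrow> (complex \<Rightarrow> complex) \<Rightarrow> bool" where
  "multiplier g \<theta> \<omega> \<longleftrightarrow> g \<in> H2 \<and> (\<forall>f\<in>Kmod \<theta>. (\<lambda>z. g z * f z) \<in> Kmod \<omega>)"

end

theory Submission
  imports Defs "HOL-Computational_Algebra.Polynomial"
begin


definition meas :: "(complex \<Rightarrow> complex) \<Rightarrow> bool" where
  "meas F \<longleftrightarrow> (\<lambda>t. F (cis t)) \<in> borel_measurable lebesgue"

definition sint :: "(complex \<Rightarrow> complex) \<Rightarrow> bool" where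
  "sint F \<longleftrightarrow> set_integrable lebesgue {0..2*pi} (\<lambda>t. F (cis t))"

definition sI :: "(complex \<Rightarrow> complex) \<Rightarrow> complex" where
  "sI F = (LINT t:{0..2*pi}|lebesgue. F (cis t))"

lemma ipL2_sI: "ipL2 f g = sI (\<lambda>z. f z * cnj (g z)) / (2*pi)"
  by (simp add: ipL2_def sI_def)

lemma meas_L2T: "L2T f \<Longrightarrow> meas f"
  by (simp add: L2T_def meas_def)

lemma meas_add[intro]: "meas f \<Longrightarrow> meas g \<Longrightarrow> meas (\<lambda>z. f z + g z)"
  unfolding meas_def by measurable
lemma meas_diff[intro]: "meas f \<Longrightarrow> meas g \<Longrightarrow> meas (\<lambda>z. f z - g z)"
  unfolding meas_def by measurable
lemma meas_mult[intro]: "meas f \<Longrightarrow> meas g \<Longrightarrow> meas (\<lambda>z. f z * g z)"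
  unfolding meas_def by measurable
lemma cont_meas_leb: "continuous_on UNIV f \<Longrightarrow> f \<in> borel_measurable lebesgue"
  using continuous_imp_measurable_on_sets_lebesgue[of UNIV f] by simp

lemma meas_comp: "meas f \<Longrightarrow> continuous_on UNIV g \<Longrightarrow> meas (\<lambda>z. g (f z))"
  unfolding meas_def using measurable_compose[OF _ borel_measurable_continuous_onI] by blast

lemma meas_cnj[intro]: "meas f \<Longrightarrow> meas (\<lambda>z. cnj (f z))"
  by (rule meas_comp) (auto intro: continuous_intros)
lemma meas_const[intro]: "meas (\<lambda>z. c)"
  unfolding meas_def by measurable
lemma meas_id[intro]: "meas (\<lambda>z. z)"
  unfolding meas_def by (intro cont_meas_leb continuous_intros)
lemma meas_powi[intro]: "meas (\<lambda>z. z powi n)"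
  unfolding meas_def cis_power_int by (intro cont_meas_leb continuous_intros)

lemma meas_real_comp: "meas f \<Longrightarrow> continuous_on UNIV (g :: complex \<Rightarrow> real) \<Longrightarrow>
   (\<lambda>t. g (f (cis t))) \<in> borel_measurable lebesgue"
  unfolding meas_def using measurable_compose[OF _ borel_measurable_continuous_onI] by blast

lemma sint_meas: "meas F \<Longrightarrow> set_borel_measurable lebesgue {0..2*pi} (\<lambda>t. F (cis t))"
  unfolding meas_def set_borel_measurable_def
  by (intro borel_measurable_scaleR borel_measurable_indicator) auto

lemma L2T_sq_int: "L2T f \<Longrightarrow> set_integrable lebesgue {0..2*pi} (\<lambda>t. (cmod (f (cis t)))^2)"
  by (simp add: L2T_def)

lemma L2T_prod_int:
  assumes "L2T f" "L2T g"
  shows "sint (\<lambda>z. f z * cnj (g z))"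
  unfolding sint_def
proof (rule set_integrable_bound)
  show "set_integrable lebesgue {0..2*pi} (\<lambda>t. (cmod (f (cis t)))^2 + (cmod (g (cis t)))^2)"
    using assms by (intro set_integral_add L2T_sq_int)
  show "set_borel_measurable lebesgue {0..2 * pi} (\<lambda>t. f (cis t) * cnj (g (cis t)))"
    using assms by (intro sint_meas[of "\<lambda>z. f z * cnj (g z)", simplified] meas_mult meas_cnj meas_L2T)
  show "AE x in lebesgue. x \<in> {0..2 * pi} \<longrightarrow>
        norm (f (cis x) * cnj (g (cis x))) \<le> norm ((cmod (f (cis x)))\<^sup>2 + (cmod (g (cis x)))\<^sup>2)"
  proof (rule AE_I2, rule impI)
    fix x
    have "cmod (f (cis x)) * cmod (g (cis x)) \<le> (cmod (f (cis x)))\<^sup>2 + (cmod (g (cis x)))\<^sup>2"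
      using sum_squares_bound[of "cmod (f (cis x))" "cmod (g (cis x))"]
        mult_nonneg_nonneg[OF norm_ge_zero norm_ge_zero, of "f (cis x)" "g (cis x)"] by linarith
    then show "norm (f (cis x) * cnj (g (cis x))) \<le> norm ((cmod (f (cis x)))\<^sup>2 + (cmod (g (cis x)))\<^sup>2)"
      by (simp add: norm_mult)
  qed
qed
lemma L2T_bound:
  assumes "L2T f" "meas h" "circ_ae (\<lambda>z. cmod (h z) \<le> C * cmod (f z))"
  shows "L2T h"
  unfolding L2T_def
proof
  show "(\<lambda>t. h (cis t)) \<in> borel_measurable lebesgue" using assms(2) by (simp add: meas_def)
  show "set_integrable lebesgue {0..2*pi} (\<lambda>t. (cmod (h (cis t)))\<^sup>2)"
  proof (rule set_integrable_bound)
    show "set_integrable lebesgue {0..2*pi} (\<lambda>t. C^2 * (cmod (f (cis t)))^2)"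
      using assms by (intro set_integrable_mult_right L2T_sq_int)
    show "set_borel_measurable lebesgue {0..2 * pi} (\<lambda>t. (cmod (h (cis t)))\<^sup>2)"
      using assms(2) unfolding set_borel_measurable_def
      by (intro borel_measurable_scaleR borel_measurable_indicator meas_real_comp)
         (auto intro: continuous_intros)
    show "AE x in lebesgue. x \<in> {0..2 * pi} \<longrightarrow>
          norm ((cmod (h (cis x)))\<^sup>2) \<le> norm (C\<^sup>2 * (cmod (f (cis x)))\<^sup>2)"
      using assms(3) unfolding circ_ae_def
    proof eventually_elim
      case (elim x)
      show ?case
      proof
        assume "x \<in> {0..2*pi}"
        then have a: "cmod (h (cis x)) \<le> C * cmod (f (cis x))" using elim by auto
        have "(cmod (h (cis x)))^2 \<le> (C * cmod (f (cis x)))^2"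
          using a by (intro power_mono) auto
        then show "norm ((cmod (h (cis x)))\<^sup>2) \<le> norm (C\<^sup>2 * (cmod (f (cis x)))\<^sup>2)"
          by (simp add: power_mult_distrib)
      qed
    qed
  qed
qed

lemma circ_ae_I: "(\<And>z. cmod z = 1 \<Longrightarrow> P z) \<Longrightarrow> circ_ae P"
  unfolding circ_ae_def by (intro AE_I2) auto

lemma circ_ae_mono: "circ_ae P \<Longrightarrow> (\<And>z. cmod z = 1 \<Longrightarrow> P z \<Longrightarrow> Q z) \<Longrightarrow> circ_ae Q"
  unfolding circ_ae_def by (erule eventually_mono) auto

lemma circ_ae_conj: assumes "circ_ae P" "circ_ae Q" shows "circ_ae (\<lambda>z. P z \<and> Q z)"
  using eventually_conj[OF assms[unfolded circ_ae_def]] unfolding circ_ae_def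
  by (rule eventually_mono) auto

lemma L2T_I:
  assumes "meas h" "set_integrable lebesgue {0..2*pi} G"
    "\<And>t. t \<in> {0..2*pi} \<Longrightarrow> (cmod (h (cis t)))^2 \<le> G t"
  shows "L2T h"
  unfolding L2T_def
proof
  show "(\<lambda>t. h (cis t)) \<in> borel_measurable lebesgue" using assms(1) by (simp add: meas_def)
  show "set_integrable lebesgue {0..2*pi} (\<lambda>t. (cmod (h (cis t)))\<^sup>2)"
  proof (rule set_integrable_bound[OF assms(2)])
    show "set_borel_measurable lebesgue {0..2 * pi} (\<lambda>t. (cmod (h (cis t)))\<^sup>2)"
      using assms(1) unfolding set_borel_measurable_def
      by (intro borel_measurable_scaleR borel_measurable_indicator meas_real_comp)
         (auto intro: continuous_intros)
    show "AE x in lebesgue. x \<in> {0..2 * pi} \<longrightarrow> norm ((cmod (h (cis x)))\<^sup>2) \<le> norm (G x)"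
      using assms(3) by (intro AE_I2 impI) (smt (verit, best) real_norm_def zero_le_power2)
  qed
qed

lemma L2T_add[intro]:
  assumes "L2T f" "L2T g" shows "L2T (\<lambda>z. f z + g z)"
proof (rule L2T_I)
  show "meas (\<lambda>z. f z + g z)" using assms by (auto intro: meas_L2T)
  show "set_integrable lebesgue {0..2*pi} (\<lambda>t. 2 * (cmod (f (cis t)))^2 + 2 * (cmod (g (cis t)))^2)"
    using assms by (intro set_integral_add set_integrable_mult_right L2T_sq_int)
  fix t
  have "cmod (f (cis t) + g (cis t)) \<le> cmod (f (cis t)) + cmod (g (cis t))" by (rule norm_triangle_ineq)
  then have "(cmod (f (cis t) + g (cis t)))^2 \<le> (cmod (f (cis t)) + cmod (g (cis t)))^2"
    by (intro power_mono) auto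
  also have "\<dots> \<le> 2 * (cmod (f (cis t)))^2 + 2 * (cmod (g (cis t)))^2"
    using sum_squares_bound[of "cmod (f (cis t))" "cmod (g (cis t))"] by (simp add: power2_sum)
  finally show "(cmod (f (cis t) + g (cis t)))^2 \<le> 2 * (cmod (f (cis t)))^2 + 2 * (cmod (g (cis t)))^2" .
qed

lemma L2T_cmult[intro]:
  assumes "L2T f" shows "L2T (\<lambda>z. c * f z)"
proof (rule L2T_I)
  show "meas (\<lambda>z. c * f z)" using assms by (auto intro: meas_L2T)
  show "set_integrable lebesgue {0..2*pi} (\<lambda>t. (cmod c)^2 * (cmod (f (cis t)))^2)"
    using assms by (intro set_integrable_mult_right L2T_sq_int)
qed (simp add: norm_mult power_mult_distrib)

lemma L2T_neg[intro]: "L2T f \<Longrightarrow> L2T (\<lambda>z. - f z)"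
  using L2T_cmult[of f "-1"] by simp

lemma L2T_diff[intro]: "L2T f \<Longrightarrow> L2T g \<Longrightarrow> L2T (\<lambda>z. f z - g z)"
  using L2T_add[of f "\<lambda>z. - g z"] by auto

lemma L2T_cnj[intro]:
  assumes "L2T f" shows "L2T (\<lambda>z. cnj (f z))"
proof (rule L2T_I)
  show "meas (\<lambda>z. cnj (f z))" using assms by (auto intro: meas_L2T)
  show "set_integrable lebesgue {0..2*pi} (\<lambda>t. (cmod (f (cis t)))^2)"
    using assms by (intro L2T_sq_int)
qed simp

lemma L2T_bdd_mult:
  assumes "meas h" "L2T f" "\<And>z. cmod z = 1 \<Longrightarrow> cmod (h z) \<le> M"
  shows "L2T (\<lambda>z. h z * f z)"
proof (rule L2T_I)
  show "meas (\<lambda>z. h z * f z)" using assms by (auto intro: meas_L2T)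
  show "set_integrable lebesgue {0..2*pi} (\<lambda>t. M^2 * (cmod (f (cis t)))^2)"
    using assms by (intro set_integrable_mult_right L2T_sq_int)
  fix t
  have "cmod (h (cis t)) \<le> M" using assms(3) by simp
  then have "(cmod (h (cis t)))^2 \<le> M^2" by (intro power_mono) auto
  then show "(cmod (h (cis t) * f (cis t)))\<^sup>2 \<le> M\<^sup>2 * (cmod (f (cis t)))\<^sup>2"
    by (simp add: norm_mult power_mult_distrib mult_right_mono)
qed

lemma L2T_ae_mult:
  assumes "meas h" "L2T f" "circ_ae (\<lambda>z. cmod (h z) \<le> M)"
  shows "L2T (\<lambda>z. h z * f z)"
proof (rule L2T_bound[OF assms(2)])
  show "meas (\<lambda>z. h z * f z)" using assms by (auto intro: meas_L2T)
  show "circ_ae (\<lambda>z. cmod (h z * f z) \<le> M * cmod (f z))"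
    using assms(3) by (rule circ_ae_mono) (simp add: norm_mult mult_right_mono)
qed

lemma L2T_const[intro]: "L2T (\<lambda>z. c)"
proof (rule L2T_I)
  show "set_integrable lebesgue {0..2*pi} (\<lambda>t. (cmod c)^2)"
    by (intro absolutely_integrable_continuous_real continuous_intros)
qed auto

lemma L2T_powi[intro]: "L2T (\<lambda>z. z powi n)"
  using L2T_bdd_mult[of "\<lambda>z. z powi n" "\<lambda>z. 1" 1] by (auto simp: norm_power_int)

lemma L2T_mult_z[intro]: "L2T f \<Longrightarrow> L2T (\<lambda>z. z * f z)"
  using L2T_bdd_mult[of "\<lambda>z. z" f 1] by auto

lemma L2T_mult_cnjz[intro]: "L2T f \<Longrightarrow> L2T (\<lambda>z. cnj z * f z)"
  using L2T_bdd_mult[of "\<lambda>z. cnj z" f 1] meas_cnj[OF meas_id] by auto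

lemma sI_cnj: "sI (\<lambda>z. cnj (F z)) = cnj (sI F)"
proof -
  have "(\<lambda>x. indicator {0..2*pi} x *\<^sub>R cnj (F (cis x))) = (\<lambda>x. cnj (indicator {0..2*pi} x *\<^sub>R F (cis x)))"
    by (auto simp: fun_eq_iff indicator_def)
  then show ?thesis
    unfolding sI_def set_lebesgue_integral_def
    using Bochner_Integration.integral_cnj[where M=lebesgue and f="\<lambda>x. indicator {0..2*pi} x *\<^sub>R F (cis x)"] by simp
qed

lemma ipL2_cnj: "ipL2 g f = cnj (ipL2 f g)"
proof -
  have "sI (\<lambda>z. g z * cnj (f z)) = sI (\<lambda>z. cnj (f z * cnj (g z)))" by (simp add: mult.commute)
  then show ?thesis unfolding ipL2_sI sI_cnj by simp
qed

lemma ipL2_add_left: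
  assumes "L2T f1" "L2T f2" "L2T g"
  shows "ipL2 (\<lambda>z. f1 z + f2 z) g = ipL2 f1 g + ipL2 f2 g"
proof -
  have "sI (\<lambda>z. (f1 z + f2 z) * cnj (g z)) = sI (\<lambda>z. f1 z * cnj (g z) + f2 z * cnj (g z))"
    by (simp add: distrib_right)
  also have "\<dots> = sI (\<lambda>z. f1 z * cnj (g z)) + sI (\<lambda>z. f2 z * cnj (g z))"
    using L2T_prod_int[OF assms(1,3)] L2T_prod_int[OF assms(2,3)]
    unfolding sI_def sint_def by (rule set_integral_add(2))
  finally show ?thesis unfolding ipL2_sI by (simp add: add_divide_distrib)
qed

lemma ipL2_cmult_left: "ipL2 (\<lambda>z. c * f z) g = c * ipL2 f g"
  unfolding ipL2_sI sI_def by (simp add: mult.assoc)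

lemma ipL2_neg_left: "ipL2 (\<lambda>z. - f z) g = - ipL2 f g"
  using ipL2_cmult_left[of "-1" f g] by simp

lemma ipL2_diff_left:
  assumes "L2T f1" "L2T f2" "L2T g"
  shows "ipL2 (\<lambda>z. f1 z - f2 z) g = ipL2 f1 g - ipL2 f2 g"
  using ipL2_add_left[of f1 "\<lambda>z. - f2 z" g] assms by (auto simp: ipL2_neg_left)

lemma ipL2_add_right:
  assumes "L2T f" "L2T g1" "L2T g2"
  shows "ipL2 f (\<lambda>z. g1 z + g2 z) = ipL2 f g1 + ipL2 f g2"
  using ipL2_add_left[OF assms(2,3,1)] by (metis complex_cnj_add ipL2_cnj)

lemma ipL2_cmult_right: "ipL2 f (\<lambda>z. c * g z) = cnj c * ipL2 f g"
  by (metis complex_cnj_cnj complex_cnj_mult ipL2_cmult_left ipL2_cnj)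

lemma ipL2_diff_right:
  assumes "L2T f" "L2T g1" "L2T g2"
  shows "ipL2 f (\<lambda>z. g1 z - g2 z) = ipL2 f g1 - ipL2 f g2"
  using ipL2_diff_left[OF assms(2,3,1)] by (metis complex_cnj_diff ipL2_cnj)

lemma ipL2_zero_left[simp]: "ipL2 (\<lambda>z. 0) g = 0"
  unfolding ipL2_sI sI_def by simp

lemma ipL2_zero_right[simp]: "ipL2 f (\<lambda>z. 0) = 0"
  unfolding ipL2_sI sI_def by simp

definition nsq :: "(complex \<Rightarrow> complex) \<Rightarrow> real" where
  "nsq f = (LINT t:{0..2*pi}|lebesgue. (cmod (f (cis t)))^2)"

lemma nsq_nonneg: "nsq f \<ge> 0"
  unfolding nsq_def set_lebesgue_integral_def
  by (intro integral_nonneg_AE) (auto simp: indicator_def)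

lemma ipL2_self: "ipL2 f f = of_real (nsq f / (2*pi))"
proof -
  have e: "(\<lambda>z. f z * cnj (f z)) = (\<lambda>z. complex_of_real ((cmod (f z))^2))"
    by (intro ext) (metis complex_norm_square of_real_power)
  have "ipL2 f f = sI (\<lambda>z. complex_of_real ((cmod (f z))^2)) / (2*pi)"
    unfolding ipL2_sI e ..
  then show ?thesis
    unfolding sI_def set_integral_complex_of_real nsq_def by simp
qed

lemma nsq_zero:
  assumes "L2T f" "nsq f = 0" shows "circ_ae (\<lambda>z. f z = 0)"
proof -
  have i: "integrable lebesgue (\<lambda>t. indicator {0..2*pi} t *\<^sub>R (cmod (f (cis t)))^2)"
    using L2T_sq_int[OF assms(1)] by (simp add: set_integrable_def)
  have "AE t in lebesgue. indicator {0..2*pi} t *\<^sub>R (cmod (f (cis t)))^2 = (0::real)"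
    using assms(2) integral_nonneg_eq_0_iff_AE[OF i] unfolding nsq_def set_lebesgue_integral_def
    by (auto simp: indicator_def)
  then show ?thesis unfolding circ_ae_def
    by (rule eventually_mono) (auto simp: indicator_def)
qed

lemma ipL2_cong:
  assumes "meas f" "meas f'" "meas g" "meas g'" "aeq f f'" "aeq g g'"
  shows "ipL2 f g = ipL2 f' g'"
proof -
  have "(LINT t:{0..2*pi}|lebesgue. f (cis t) * cnj (g (cis t))) =
        (LINT t:{0..2*pi}|lebesgue. f' (cis t) * cnj (g' (cis t)))"
  proof (rule set_lebesgue_integral_cong_AE)
    show "(\<lambda>t. f (cis t) * cnj (g (cis t))) \<in> borel_measurable lebesgue"
      using meas_mult[OF assms(1) meas_cnj[OF assms(3)]] by (simp add: meas_def)
    show "(\<lambda>t. f' (cis t) * cnj (g' (cis t))) \<in> borel_measurable lebesgue"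
      using meas_mult[OF assms(2) meas_cnj[OF assms(4)]] by (simp add: meas_def)
    show "AE x\<in>{0..2*pi} in lebesgue. f (cis x) * cnj (g (cis x)) = f' (cis x) * cnj (g' (cis x))"
      using circ_ae_conj[OF assms(5,6)[unfolded aeq_def]] unfolding circ_ae_def
      by (rule eventually_mono) auto
  qed auto
  then show ?thesis by (simp add: ipL2_def)
qed

lemma cis_int:
  fixes k :: int assumes "k \<noteq> 0"
  shows "((\<lambda>t. cis (of_int k * t)) has_integral 0) {0..2*pi}"
proof -
  define F where "F = (\<lambda>t::real. exp (\<i> * of_int k * of_real t) / (\<i> * of_int k))"
  have d: "(F has_vector_derivative cis (of_int k * t)) (at t within {0..2*pi})" for t
  proof -
    have "((\<lambda>z. exp (\<i> * of_int k * z) / (\<i> * of_int k)) has_field_derivative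
           exp (\<i> * of_int k * of_real t)) (at (of_real t))"
      using assms by (auto intro!: derivative_eq_intros)
    from has_vector_derivative_real_field[OF this] show ?thesis
      unfolding F_def by (auto intro: has_vector_derivative_at_within simp: cis_conv_exp mult.commute mult.left_commute)
  qed
  have "((\<lambda>t. cis (of_int k * t)) has_integral (F (2*pi) - F 0)) {0..2*pi}"
    by (rule fundamental_theorem_of_calculus) (auto intro: d)
  moreover have "F (2*pi) = F 0"
    unfolding F_def
    using cis_multiple_2pi[of "of_int k"]
    by (simp add: cis_conv_exp[symmetric] mult.commute mult.left_commute)
  ultimately show ?thesis by simp
qed

lemma sI_powi: "sI (\<lambda>z. z powi k) = (if k = 0 then 2*pi else 0)"
proof (cases "k = 0")
  case True
  have "sI (\<lambda>z. z powi k) = (LINT t:{0..2*pi}|lebesgue. (1::complex))"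
    unfolding sI_def using True by simp
  also have "\<dots> = integral {0..2*pi} (\<lambda>t. 1::complex)"
    by (intro set_lebesgue_integral_eq_integral absolutely_integrable_continuous_real continuous_intros)
  also have "\<dots> = 2*pi" by (simp add: scaleR_conv_of_real)
  finally show ?thesis using True by simp
next
  case False
  have "sI (\<lambda>z. z powi k) = (LINT t:{0..2*pi}|lebesgue. cis (of_int k * t))"
    unfolding sI_def by (simp add: cis_power_int)
  also have "\<dots> = integral {0..2*pi} (\<lambda>t. cis (of_int k * t))"
    by (intro set_lebesgue_integral_eq_integral absolutely_integrable_continuous_real continuous_intros)
  also have "\<dots> = 0" using cis_int[OF False] by (rule integral_unique)
  finally show ?thesis using False by simp
qed

lemma cnj_circle: "cmod z = 1 \<Longrightarrow> cnj z = inverse z"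
proof -
  assume a: "cmod z = 1"
  have "z * cnj z = 1" using complex_norm_square[of z] a by simp
  then show ?thesis by (metis inverse_unique)
qed

lemma powi_cnj_circle: "cmod z = 1 \<Longrightarrow> cnj (z powi n) = z powi (-n)"
  by (simp add: cnj_circle power_int_inverse power_int_minus)

lemma powi_mult_cnj: "cmod z = 1 \<Longrightarrow> z powi m * cnj (z powi n) = z powi (m - n)"
proof -
  assume a: "cmod z = 1"
  then have "z \<noteq> 0" by auto
  then show ?thesis using a
    by (simp add: powi_cnj_circle power_int_diff power_int_minus divide_inverse del: complex_cnj_power_int)
qed

lemma ipL2_powi: "ipL2 (\<lambda>z. z powi m) (\<lambda>z. z powi n) = (if m = n then 1 else 0)"
proof -
  have "ipL2 (\<lambda>z. z powi m) (\<lambda>z. z powi n) =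
    (LINT t:{0..2*pi}|lebesgue. cis t powi m * cnj (cis t powi n)) / (2*pi)"
    unfolding ipL2_def ..
  also have "\<dots> = (LINT t:{0..2*pi}|lebesgue. cis t powi (m - n)) / (2*pi)"
    using powi_mult_cnj[OF norm_cis] by (simp only:)
  also have "\<dots> = sI (\<lambda>z. z powi (m - n)) / (2*pi)" unfolding sI_def ..
  finally show ?thesis by (simp add: sI_powi)
qed



lemma ipL2_circ_cong:
  assumes "\<And>z. cmod z = 1 \<Longrightarrow> f z * cnj (g z) = f' z * cnj (g' z)"
  shows "ipL2 f g = ipL2 f' g'"
  unfolding ipL2_def using assms[OF norm_cis] by (simp only:)

lemma ipL2_ae_cong:
  assumes "meas f" "meas g" "meas f'" "meas g'"
    "circ_ae (\<lambda>z. f z * cnj (g z) = f' z * cnj (g' z))"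
  shows "ipL2 f g = ipL2 f' g'"
proof -
  have "(LINT t:{0..2*pi}|lebesgue. f (cis t) * cnj (g (cis t))) =
        (LINT t:{0..2*pi}|lebesgue. f' (cis t) * cnj (g' (cis t)))"
  proof (rule set_lebesgue_integral_cong_AE)
    show "(\<lambda>t. f (cis t) * cnj (g (cis t))) \<in> borel_measurable lebesgue"
      using meas_mult[OF assms(1) meas_cnj[OF assms(2)]] by (simp add: meas_def)
    show "(\<lambda>t. f' (cis t) * cnj (g' (cis t))) \<in> borel_measurable lebesgue"
      using meas_mult[OF assms(3) meas_cnj[OF assms(4)]] by (simp add: meas_def)
    show "AE x\<in>{0..2*pi} in lebesgue. f (cis x) * cnj (g (cis x)) = f' (cis x) * cnj (g' (cis x))"
      using assms(5) unfolding circ_ae_def by (rule eventually_mono) auto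
  qed auto
  then show ?thesis by (simp add: ipL2_def)
qed

lemma L2T_circ_cong:
  assumes "L2T f" "\<And>z. cmod z = 1 \<Longrightarrow> f z = f' z"
  shows "L2T f'"
  using assms(1) unfolding L2T_def by (simp add: assms(2)[OF norm_cis])

lemma fc_circ_cong:
  assumes "\<And>z. cmod z = 1 \<Longrightarrow> f z = f' z"
  shows "fourier_coeff f n = fourier_coeff f' n"
  unfolding fourier_coeff_def by (rule ipL2_circ_cong) (simp add: assms)

lemma H2_circ_cong:
  assumes "f \<in> H2" "\<And>z. cmod z = 1 \<Longrightarrow> f z = f' z"
  shows "f' \<in> H2"
  using assms L2T_circ_cong[OF _ assms(2)] fc_circ_cong[OF assms(2)] by (auto simp: H2_def)

lemma H2_L2T: "f \<in> H2 \<Longrightarrow> L2T f" by (simp add: H2_def)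
lemma H2_fc: "f \<in> H2 \<Longrightarrow> n < 0 \<Longrightarrow> fourier_coeff f n = 0" by (simp add: H2_def)

lemma fc_add: "L2T f \<Longrightarrow> L2T g \<Longrightarrow> fourier_coeff (\<lambda>z. f z + g z) n = fourier_coeff f n + fourier_coeff g n"
  unfolding fourier_coeff_def by (rule ipL2_add_left) auto
lemma fc_diff: "L2T f \<Longrightarrow> L2T g \<Longrightarrow> fourier_coeff (\<lambda>z. f z - g z) n = fourier_coeff f n - fourier_coeff g n"
  unfolding fourier_coeff_def by (rule ipL2_diff_left) auto
lemma fc_cmult: "fourier_coeff (\<lambda>z. c * f z) n = c * fourier_coeff f n"
  unfolding fourier_coeff_def by (rule ipL2_cmult_left)

lemma fc_const: "fourier_coeff (\<lambda>z. c) n = (if n = 0 then c else 0)"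
proof -
  have "fourier_coeff (\<lambda>z. c) n = c * ipL2 (\<lambda>z. z powi 0) (\<lambda>z. z powi n)"
    unfolding fourier_coeff_def using ipL2_cmult_left[of c "\<lambda>z. 1"] by simp
  then show ?thesis using ipL2_powi[of 0 n] by simp
qed

lemma fc_mult_z: "fourier_coeff (\<lambda>z. z * f z) n = fourier_coeff f (n - 1)"
  unfolding fourier_coeff_def
proof (rule ipL2_circ_cong)
  fix z :: complex assume a: "cmod z = 1"
  then have "z \<noteq> 0" by auto
  have "z powi (1 + -n) = z powi 1 * z powi (-n)" by (rule power_int_add) (use \<open>z \<noteq> 0\<close> in simp)
  then have "z * cnj (z powi n) = cnj (z powi (n - 1))"
    by (simp only: powi_cnj_circle[OF a]) (simp add: add.commute)
  then show "z * f z * cnj (z powi n) = f z * cnj (z powi (n - 1))" by (simp add: mult.commute mult.left_commute)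
qed

lemma fc_mult_cnjz: "fourier_coeff (\<lambda>z. cnj z * f z) n = fourier_coeff f (n + 1)"
  unfolding fourier_coeff_def
proof (rule ipL2_circ_cong)
  fix z :: complex assume a: "cmod z = 1"
  then have "z \<noteq> 0" by auto
  have "cnj z * cnj (z powi n) = cnj (z powi (n + 1))"
    using a \<open>z \<noteq> 0\<close> by (simp add: power_int_add)
  then show "cnj z * f z * cnj (z powi n) = f z * cnj (z powi (n + 1))" by (simp add: mult.commute mult.left_commute)
qed

lemma H2_add[intro]: "f \<in> H2 \<Longrightarrow> g \<in> H2 \<Longrightarrow> (\<lambda>z. f z + g z) \<in> H2"
  by (auto simp: H2_def fc_add)
lemma H2_diff[intro]: "f \<in> H2 \<Longrightarrow> g \<in> H2 \<Longrightarrow> (\<lambda>z. f z - g z) \<in> H2"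
  by (auto simp: H2_def fc_diff)
lemma H2_cmult[intro]: "f \<in> H2 \<Longrightarrow> (\<lambda>z. c * f z) \<in> H2"
  by (auto simp: H2_def fc_cmult)
lemma H2_const[intro]: "(\<lambda>z. c) \<in> H2"
  by (auto simp: H2_def fc_const)
lemma H2_mult_z[intro]: "f \<in> H2 \<Longrightarrow> (\<lambda>z. z * f z) \<in> H2"
  by (auto simp: H2_def fc_mult_z)
lemma H2_shift:
  assumes "f \<in> H2" "val0 f = 0" shows "(\<lambda>z. cnj z * f z) \<in> H2"
proof -
  have "fourier_coeff f (n + 1) = 0" if "n < 0" for n
    using assms that by (cases "n = -1") (auto simp: H2_def val0_def)
  then show ?thesis using assms by (auto simp: H2_def fc_mult_cnjz)
qed

lemma val0_diff_const: "f \<in> H2 \<Longrightarrow> val0 (\<lambda>z. f z - c) = val0 f - c"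
  by (simp add: val0_def fc_diff[OF H2_L2T L2T_const] fc_const)

lemma H2_sub_shift: "f \<in> H2 \<Longrightarrow> (\<lambda>z. cnj z * (f z - val0 f)) \<in> H2"
  by (rule H2_shift) (auto simp: val0_diff_const)

lemma inner_meas: "inner_fun \<theta> \<Longrightarrow> meas \<theta>"
  by (auto simp: inner_fun_def Hinf_def H2_def intro: meas_L2T)

lemma inner_H2: "inner_fun \<theta> \<Longrightarrow> \<theta> \<in> H2"
  by (auto simp: inner_fun_def Hinf_def)

lemma inner_mod: "inner_fun \<theta> \<Longrightarrow> circ_ae (\<lambda>z. cmod (\<theta> z) = 1)"
  by (auto simp: inner_fun_def)

lemma inner_L2T_mult: "inner_fun \<theta> \<Longrightarrow> L2T h \<Longrightarrow> L2T (\<lambda>z. \<theta> z * h z)"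
  by (rule L2T_ae_mult[where M=1]) (auto simp: inner_meas elim!: circ_ae_mono dest!: inner_mod)

lemma inner_ip:
  assumes "inner_fun \<theta>" "L2T f" "L2T h"
  shows "ipL2 (\<lambda>z. \<theta> z * f z) (\<lambda>z. \<theta> z * h z) = ipL2 f h"
proof (rule ipL2_ae_cong)
  show "meas (\<lambda>z. \<theta> z * f z)" "meas (\<lambda>z. \<theta> z * h z)" "meas f" "meas h"
    using assms by (auto intro!: meas_L2T inner_L2T_mult)
  show "circ_ae (\<lambda>z. \<theta> z * f z * cnj (\<theta> z * h z) = f z * cnj (h z))"
    using inner_mod[OF assms(1)]
  proof (rule circ_ae_mono)
    fix z assume "cmod (\<theta> z) = 1"
    then have "\<theta> z * cnj (\<theta> z) = 1" using complex_norm_square[of "\<theta> z"] by simp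
    then show "\<theta> z * f z * cnj (\<theta> z * h z) = f z * cnj (h z)"
      by (simp add: algebra_simps)
  qed
qed

lemma ipL2_one_left: "L2T h \<Longrightarrow> ipL2 (\<lambda>z. 1) h = cnj (val0 h)"
proof -
  have "ipL2 (\<lambda>z. 1) h = cnj (ipL2 h (\<lambda>z. z powi 0))" by (simp add: ipL2_cnj[of "\<lambda>z. 1"])
  then show ?thesis by (simp add: val0_def fourier_coeff_def)
qed

lemma Kmod_H2: "f \<in> Kmod \<theta> \<Longrightarrow> f \<in> H2" by (simp add: Kmod_def)
lemma Kmod_L2T: "f \<in> Kmod \<theta> \<Longrightarrow> L2T f" by (simp add: Kmod_def H2_def)
lemma Kmod_orth: "f \<in> Kmod \<theta> \<Longrightarrow> h \<in> H2 \<Longrightarrow> ipL2 f (\<lambda>z. \<theta> z * h z) = 0"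
  by (simp add: Kmod_def)

lemma Kmod_diff:
  assumes "inner_fun \<theta>" "f \<in> Kmod \<theta>" "g \<in> Kmod \<theta>"
  shows "(\<lambda>z. f z - g z) \<in> Kmod \<theta>"
  using assms unfolding Kmod_def
  by (auto simp: ipL2_diff_left H2_L2T inner_L2T_mult)

lemma chi_theta_K:
  assumes "inner_fun \<theta>" "val0 \<theta> = 0"
  shows "(\<lambda>z. cnj z * \<theta> z) \<in> Kmod \<theta>"
  unfolding Kmod_def
proof (intro CollectI conjI ballI)
  show "(\<lambda>z. cnj z * \<theta> z) \<in> H2" using assms by (intro H2_shift inner_H2)
  fix h assume h: "h \<in> H2"
  have "ipL2 (\<lambda>z. cnj z * \<theta> z) (\<lambda>z. \<theta> z * h z) = ipL2 (\<lambda>z. \<theta> z * cnj z) (\<lambda>z. \<theta> z * h z)"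
    by (simp add: mult.commute)
  also have "\<dots> = ipL2 (\<lambda>z. cnj z) h"
    using assms h by (intro inner_ip) (auto intro: H2_L2T L2T_mult_cnjz[of "\<lambda>z. 1", simplified])
  also have "\<dots> = cnj (ipL2 h (\<lambda>z. z powi (-1)))"
    by (subst ipL2_cnj) (rule arg_cong[where f=cnj], rule ipL2_circ_cong, simp add: cnj_circle power_int_minus)
  also have "\<dots> = 0" using H2_fc[OF h, of "-1"] by (simp add: fourier_coeff_def)
  finally show "ipL2 (\<lambda>z. cnj z * \<theta> z) (\<lambda>z. \<theta> z * h z) = 0" .
qed

lemma one_Kmod_H2:
  assumes "inner_fun \<theta>" "f \<in> Kmod \<theta>"
  shows "ipL2 f \<theta> = 0"
  using Kmod_orth[OF assms(2) H2_const[of 1]] by simp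

lemma Kmod_self_orth:
  assumes "f \<in> Kmod \<theta>" "L2T f"
    "\<And>k. k \<in> Kmod \<theta> \<Longrightarrow> ipL2 f k = 0"
  shows "circ_ae (\<lambda>z. f z = 0)"
proof -
  have "ipL2 f f = 0" using assms by auto
  then have "nsq f = 0" using ipL2_self[of f] nsq_nonneg[of f] by simp
  then show ?thesis using nsq_zero assms(2) by blast
qed

lemma PK_shift:
  assumes th: "inner_fun \<theta>" and k: "k \<in> Kmod \<theta>"
  defines "b \<equiv> ipL2 k (\<lambda>w. cnj w * \<theta> w)"
  shows "(\<lambda>z. z * k z - b * \<theta> z) \<in> Kmod \<theta>"
    and "aeq (Sc \<theta> k) (\<lambda>z. z * k z - b * \<theta> z)"
proof -
  define p where "p = (\<lambda>z. z * k z - b * \<theta> z)"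
  have kL: "L2T k" using k by (rule Kmod_L2T)
  have thL: "L2T \<theta>" using th by (intro H2_L2T inner_H2)
  have pH: "p \<in> H2" unfolding p_def using k th by (intro H2_diff H2_mult_z H2_cmult Kmod_H2 inner_H2)
  have pK: "p \<in> Kmod \<theta>"
    unfolding Kmod_def
  proof (intro CollectI conjI ballI pH)
    fix h assume h: "h \<in> H2"
    define h' where "h' = (\<lambda>z. cnj z * (h z - val0 h))"
    have h'H: "h' \<in> H2" unfolding h'_def using h by (rule H2_sub_shift)
    have hL: "L2T h" using h by (rule H2_L2T)
    have thh: "L2T (\<lambda>z. \<theta> z * h z)" using th hL by (rule inner_L2T_mult)
    have "ipL2 (\<lambda>z. z * k z) (\<lambda>z. \<theta> z * h z) =
          ipL2 k (\<lambda>z. \<theta> z * h' z + val0 h * (cnj z * \<theta> z))"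
    proof (rule ipL2_circ_cong)
      fix z :: complex assume z: "cmod z = 1"
      then have "z * cnj z = 1" using complex_norm_square[of z] by simp
      then show "z * k z * cnj (\<theta> z * h z) = k z * cnj (\<theta> z * h' z + val0 h * (cnj z * \<theta> z))"
        unfolding h'_def by (simp add: algebra_simps)
    qed
    also have "\<dots> = ipL2 k (\<lambda>z. \<theta> z * h' z) + ipL2 k (\<lambda>z. val0 h * (cnj z * \<theta> z))"
      using kL th h'H by (intro ipL2_add_right) (auto intro: inner_L2T_mult[OF th H2_L2T] L2T_cmult L2T_mult_cnjz[OF thL])
    also have "\<dots> = cnj (val0 h) * b"
      using Kmod_orth[OF k h'H] by (simp add: ipL2_cmult_right b_def)
    finally have 1: "ipL2 (\<lambda>z. z * k z) (\<lambda>z. \<theta> z * h z) = cnj (val0 h) * b" .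
    have 2: "ipL2 (\<lambda>z. b * \<theta> z) (\<lambda>z. \<theta> z * h z) = b * cnj (val0 h)"
      using inner_ip[OF th L2T_const[of 1] hL] ipL2_one_left[OF hL]
      by (simp add: ipL2_cmult_left)
    show "ipL2 p (\<lambda>z. \<theta> z * h z) = 0"
      unfolding p_def using kL thL thh
      by (subst ipL2_diff_left) (auto simp: 1 2 intro!: L2T_mult_z L2T_cmult)
  qed
  have orth: "ipL2 (\<lambda>z. z * k z - p z) k' = 0" if "k' \<in> Kmod \<theta>" for k'
  proof -
    have "(\<lambda>z. z * k z - p z) = (\<lambda>z. b * \<theta> z)" unfolding p_def by auto
    then show ?thesis using one_Kmod_H2[OF th that] ipL2_cnj[of \<theta> k']
      by (simp add: ipL2_cmult_left)
  qed
  define q where "q = Sc \<theta> k"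
  have "\<exists>p. p \<in> Kmod \<theta> \<and> (\<forall>k'\<in>Kmod \<theta>. ipL2 (\<lambda>z. z * k z - p z) k' = 0)"
    using pK orth by blast
  then have "q \<in> Kmod \<theta> \<and> (\<forall>k'\<in>Kmod \<theta>. ipL2 (\<lambda>z. z * k z - q z) k' = 0)"
    unfolding q_def Sc_def PK_def by (rule someI_ex)
  then have q: "q \<in> Kmod \<theta>" "\<And>k'. k' \<in> Kmod \<theta> \<Longrightarrow> ipL2 (\<lambda>z. z * k z - q z) k' = 0"
    by auto
  define d where "d = (\<lambda>z. p z - q z)"
  have dK: "d \<in> Kmod \<theta>" unfolding d_def using th pK q(1) by (rule Kmod_diff)
  have dL: "L2T d" using dK by (rule Kmod_L2T)
  have "ipL2 d k' = 0" if "k' \<in> Kmod \<theta>" for k'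
  proof -
    have "d = (\<lambda>z. (z * k z - q z) - (z * k z - p z))" unfolding d_def by auto
    then have "ipL2 d k' = ipL2 (\<lambda>z. z * k z - q z) k' - ipL2 (\<lambda>z. z * k z - p z) k'"
      using kL Kmod_L2T[OF q(1)] Kmod_L2T[OF pK] Kmod_L2T[OF that]
      by (simp add: ipL2_diff_left L2T_diff L2T_mult_z)
    then show ?thesis using q(2)[OF that] orth[OF that] by simp
  qed
  then have "circ_ae (\<lambda>z. d z = 0)" using Kmod_self_orth[OF dK dL] by blast
  then have "aeq q p" unfolding aeq_def d_def by (rule circ_ae_mono) simp
  then show "aeq (Sc \<theta> k) (\<lambda>z. z * k z - b * \<theta> z)" by (simp add: q_def p_def)
  show "(\<lambda>z. z * k z - b * \<theta> z) \<in> Kmod \<theta>" using pK by (simp add: p_def)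
qed



definition tp :: "(complex \<Rightarrow> complex) \<Rightarrow> bool" where
  "tp p \<longleftrightarrow> (\<exists>P N. \<forall>z. cmod z = 1 \<longrightarrow> p z = poly P z * cnj z ^ N)"

lemma tp_circ_cong: "tp f \<Longrightarrow> (\<And>z. cmod z = 1 \<Longrightarrow> f z = g z) \<Longrightarrow> tp g"
  unfolding tp_def by metis

lemma circ_zcnj: "cmod z = 1 \<Longrightarrow> z * cnj z = 1"
  using complex_norm_square[of z] by simp

lemma tp_const[intro]: "tp (\<lambda>z. c)"
  unfolding tp_def by (rule exI[of _ "[:c:]"], rule exI[of _ 0]) simp

lemma tp_mult[intro]: assumes "tp f" "tp g" shows "tp (\<lambda>z. f z * g z)"
proof -
  obtain P N Q M where f: "\<And>z. cmod z = 1 \<Longrightarrow> f z = poly P z * cnj z ^ N"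
    and g: "\<And>z. cmod z = 1 \<Longrightarrow> g z = poly Q z * cnj z ^ M"
    using assms unfolding tp_def by metis
  show ?thesis unfolding tp_def
    by (rule exI[of _ "P * Q"], rule exI[of _ "N + M"]) (simp add: f g power_add algebra_simps)
qed

lemma tp_add[intro]: assumes "tp f" "tp g" shows "tp (\<lambda>z. f z + g z)"
proof -
  obtain P N Q M where f: "\<And>z. cmod z = 1 \<Longrightarrow> f z = poly P z * cnj z ^ N"
    and g: "\<And>z. cmod z = 1 \<Longrightarrow> g z = poly Q z * cnj z ^ M"
    using assms unfolding tp_def by metis
  show ?thesis unfolding tp_def
  proof (rule exI[of _ "P * monom 1 M + Q * monom 1 N"], rule exI[of _ "N + M"], intro allI impI)
    fix z :: complex assume z: "cmod z = 1"
    have e: "(z * cnj z) ^ M = 1" "(z * cnj z) ^ N = 1" using circ_zcnj[OF z] by auto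
    have "f z + g z = poly P z * cnj z ^ N * (z * cnj z) ^ M + poly Q z * cnj z ^ M * (z * cnj z) ^ N"
      using e f[OF z] g[OF z] by simp
    also have "\<dots> = poly (P * monom 1 M + Q * monom 1 N) z * cnj z ^ (N + M)"
      by (simp add: poly_monom power_add power_mult_distrib algebra_simps)
    finally show "f z + g z = poly (P * monom 1 M + Q * monom 1 N) z * cnj z ^ (N + M)" .
  qed
qed

lemma tp_cmult[intro]: "tp f \<Longrightarrow> tp (\<lambda>z. c * f z)"
  using tp_mult[OF tp_const] by blast

lemma tp_z: "tp (\<lambda>z. z)"
  unfolding tp_def by (rule exI[of _ "[:0,1:]"], rule exI[of _ 0]) simp

lemma tp_cnjz: "tp (\<lambda>z. cnj z)"
  unfolding tp_def by (rule exI[of _ "[:1:]"], rule exI[of _ 1]) simp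

lemma tp_Re: "tp (\<lambda>z. complex_of_real (Re z))"
proof -
  have "tp (\<lambda>z. (1/2) * (z + cnj z))" using tp_cmult[OF tp_add[OF tp_z tp_cnjz]] .
  then show ?thesis by (rule tp_circ_cong) (simp add: complex_add_cnj)
qed

lemma tp_Im: "tp (\<lambda>z. complex_of_real (Im z))"
proof -
  have "tp (\<lambda>z. (1/(2*\<i>)) * (z + (-1) * cnj z))"
    using tp_cmult[OF tp_add[OF tp_z tp_cmult[OF tp_cnjz]]] .
  then show ?thesis by (rule tp_circ_cong) (simp add: complex_diff_cnj algebra_simps)
qed

lemma bounded_linear_complex_real:
  fixes h :: "complex \<Rightarrow> real"
  assumes "bounded_linear h"
  shows "h z = Re z * h 1 + Im z * h \<i>"
proof -
  interpret linear h using assms by (rule bounded_linear.linear)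
  have "z = Re z *\<^sub>R 1 + Im z *\<^sub>R \<i>" by (simp add: complex_eq_iff)
  then have "h z = h (Re z *\<^sub>R 1 + Im z *\<^sub>R \<i>)" by simp
  also have "\<dots> = Re z * h 1 + Im z * h \<i>" by (simp add: add scale)
  finally show ?thesis .
qed

lemma tp_real_poly: "real_polynomial_function h \<Longrightarrow> tp (\<lambda>z. complex_of_real (h z))"
proof (induction rule: real_polynomial_function.induct)
  case (linear h)
  have "tp (\<lambda>z. complex_of_real (Re z) * h 1 + complex_of_real (Im z) * h \<i>)"
    using tp_Re tp_Im by (intro tp_add tp_mult tp_const)
  then show ?case
  proof (rule tp_circ_cong)
    fix z :: complex
    have "h z = Re z * h 1 + Im z * h \<i>" by (rule bounded_linear_complex_real[OF linear])
    then show "complex_of_real (Re z) * complex_of_real (h 1) + complex_of_real (Im z) * complex_of_real (h \<i>) =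
      complex_of_real (h z)" by simp
  qed
next
  case (const c) then show ?case by auto
next
  case (add f g) then show ?case by (auto intro: tp_circ_cong)
next
  case (mult f g) then show ?case by (auto intro: tp_circ_cong)
qed

lemma tp_poly_fun:
  assumes "polynomial_function (g :: complex \<Rightarrow> complex)"
  shows "tp g"
proof -
  have "real_polynomial_function (Re \<circ> g)" "real_polynomial_function (Im \<circ> g)"
    using assms unfolding polynomial_function_def by (auto intro: bounded_linear_Re bounded_linear_Im)
  then have "tp (\<lambda>z. complex_of_real (Re (g z)) + \<i> * complex_of_real (Im (g z)))"
    using tp_real_poly by (intro tp_add tp_mult tp_const) (auto simp: o_def)
  then show ?thesis by (rule tp_circ_cong) (simp add: complex_eq_iff)
qed

lemma tp_sum:
  assumes "tp p"
  obtains S :: "nat set" and a e where "finite S"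
    "\<And>z. cmod z = 1 \<Longrightarrow> p z = (\<Sum>i\<in>S. a i * z powi e i)"
proof -
  obtain P N where p: "\<And>z. cmod z = 1 \<Longrightarrow> p z = poly P z * cnj z ^ N"
    using assms unfolding tp_def by metis
  show ?thesis
  proof (rule that[of "{..degree P}" "\<lambda>i. coeff P i" "\<lambda>i. int i - int N"])
    fix z :: complex assume z: "cmod z = 1"
    then have z0: "z \<noteq> 0" by auto
    have "p z = (\<Sum>i\<le>degree P. coeff P i * z ^ i) * z powi (- int N)"
      using p[OF z] cnj_circle[OF z] by (simp add: poly_altdef power_int_minus power_inverse)
    also have "\<dots> = (\<Sum>i\<le>degree P. coeff P i * z powi (int i - int N))"
      using z0 by (simp add: sum_distrib_right power_int_diff power_int_minus divide_inverse mult.assoc)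
    finally show "p z = (\<Sum>i\<le>degree P. coeff P i * z powi (int i - int N))" .
  qed simp
qed

lemma L2T_sum: "finite S \<Longrightarrow> L2T (\<lambda>z. \<Sum>i\<in>S. a i * z powi e i)"
proof (induction rule: finite_induct)
  case empty then show ?case using L2T_const[of 0] by simp
next
  case (insert x F) then show ?case by (simp add: L2T_add L2T_cmult L2T_powi)
qed

lemma tp_L2T: assumes "tp p" shows "L2T p"
proof -
  obtain S :: "nat set" and a e where "finite S" "\<And>z. cmod z = 1 \<Longrightarrow> p z = (\<Sum>i\<in>S. a i * z powi e i)"
    using tp_sum[OF assms] by blast
  then show ?thesis using L2T_circ_cong[OF L2T_sum[of S a e], of p] by auto
qed

lemma ipL2_sum_left:
  assumes "finite S" "L2T h"
  shows "ipL2 (\<lambda>z. \<Sum>i\<in>S. a i * z powi e i) h = (\<Sum>i\<in>S. a i * cnj (fourier_coeff h (e i)))"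
  using assms(1)
proof (induction rule: finite_induct)
  case empty then show ?case by simp
next
  case (insert x F)
  have "ipL2 (\<lambda>z. \<Sum>i\<in>insert x F. a i * z powi e i) h =
        ipL2 (\<lambda>z. a x * z powi e x + (\<Sum>i\<in>F. a i * z powi e i)) h"
    using insert by simp
  also have "\<dots> = a x * ipL2 (\<lambda>z. z powi e x) h + ipL2 (\<lambda>z. \<Sum>i\<in>F. a i * z powi e i) h"
    using insert assms(2) by (subst ipL2_add_left) (auto simp: ipL2_cmult_left intro: L2T_sum)
  also have "ipL2 (\<lambda>z. z powi e x) h = cnj (fourier_coeff h (e x))"
    by (simp add: fourier_coeff_def ipL2_cnj[of _ h])
  finally show ?case using insert by simp
qed

lemma ipL2_bound:
  assumes a: "L2T a" and b: "L2T b" and s: "s > 0"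
  shows "cmod (ipL2 a b) \<le> (s * nsq a + nsq b / s) / (4*pi)"
proof -
  define A where "A = (\<lambda>t. indicator {0..2*pi} t *\<^sub>R (cmod (a (cis t)))^2 :: real)"
  define B where "B = (\<lambda>t. indicator {0..2*pi} t *\<^sub>R (cmod (b (cis t)))^2 :: real)"
  have iA: "integrable lebesgue A" using L2T_sq_int[OF a] by (simp add: A_def set_integrable_def)
  have iB: "integrable lebesgue B" using L2T_sq_int[OF b] by (simp add: B_def set_integrable_def)
  have "norm (sI (\<lambda>z. a z * cnj (b z))) \<le> integral\<^sup>L lebesgue (\<lambda>t. (s * A t + B t / s) / 2)"
    unfolding sI_def set_lebesgue_integral_def
  proof (rule Bochner_Integration.integral_norm_bound_integral)
    show "integrable lebesgue (\<lambda>x. indicat_real {0..2 * pi} x *\<^sub>R (a (cis x) * cnj (b (cis x))))"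
      using L2T_prod_int[OF a b] by (simp add: sint_def set_integrable_def)
    show "integrable lebesgue (\<lambda>t. (s * A t + B t / s) / 2)" using iA iB by auto
    fix t
    define x where "x = cmod (a (cis t))"
    define y where "y = cmod (b (cis t))"
    have "0 \<le> (s * x - y)^2" by simp
    then have "2 * s * (x * y) \<le> s * (s * x^2) + y^2" by (simp add: power2_eq_square algebra_simps)
    then have "2 * (x * y) \<le> s * x^2 + y^2 / s" using s
      by (simp add: field_simps power2_eq_square)
    then have "x * y \<le> (s * x^2 + y^2 / s) / 2" by simp
    then show "norm (indicat_real {0..2 * pi} t *\<^sub>R (a (cis t) * cnj (b (cis t)))) \<le> (s * A t + B t / s) / 2"
      unfolding A_def B_def x_def y_def by (cases "t \<in> {0..2*pi}") (simp_all add: norm_mult)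
  qed
  also have "integral\<^sup>L lebesgue (\<lambda>t. (s * A t + B t / s) / 2) =
      (s * integral\<^sup>L lebesgue A + integral\<^sup>L lebesgue B / s) / 2"
    using iA iB by simp
  also have "integral\<^sup>L lebesgue A = nsq a" by (simp add: A_def nsq_def set_lebesgue_integral_def)
  also have "integral\<^sup>L lebesgue B = nsq b" by (simp add: B_def nsq_def set_lebesgue_integral_def)
  finally have "norm (sI (\<lambda>z. a z * cnj (b z))) \<le> (s * nsq a + nsq b / s) / 2" .
  then have "norm (sI (\<lambda>z. a z * cnj (b z))) / (2*pi) \<le> (s * nsq a + nsq b / s) / 2 / (2*pi)"
    by (intro divide_right_mono) auto
  then show ?thesis unfolding ipL2_sI norm_divide by simp
qed



definition Qn :: "(real \<Rightarrow> complex) \<Rightarrow> ennreal" where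
  "Qn f = (\<integral>\<^sup>+ t. ennreal (indicator {0..2*pi} t * (cmod (f t))^2) \<partial>lebesgue)"

lemma Qn_nsq:
  assumes "L2T f" shows "Qn (\<lambda>t. f (cis t)) = ennreal (nsq f)"
proof -
  have i: "integrable lebesgue (\<lambda>t. indicator {0..2*pi} t * (cmod (f (cis t)))^2)"
    using L2T_sq_int[OF assms] by (simp add: set_integrable_def)
  show ?thesis
    unfolding Qn_def nsq_def set_lebesgue_integral_def
    using nn_integral_eq_integral[OF i] by (simp add: indicator_def)
qed

lemma Qn_mono:
  assumes "\<And>t. t \<in> {0..2*pi} \<Longrightarrow> cmod (f t) \<le> cmod (g t)"
  shows "Qn f \<le> Qn g"
  unfolding Qn_def
proof (rule nn_integral_mono)
  fix t
  show "ennreal (indicator {0..2*pi} t * (cmod (f t))^2) \<le> ennreal (indicator {0..2*pi} t * (cmod (g t))^2)"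
    using assms[of t] by (cases "t \<in> {0..2*pi}") (auto intro!: ennreal_leI power_mono)
qed

lemma Qn_meas: "f \<in> borel_measurable lebesgue \<Longrightarrow>
  (\<lambda>t. ennreal (indicator {0..2*pi} t * (cmod (f t))^2)) \<in> borel_measurable lebesgue"
proof -
  assume a: "f \<in> borel_measurable lebesgue"
  have "(\<lambda>x. (cmod (f x))^2) \<in> borel_measurable lebesgue"
    by (rule measurable_compose[OF a borel_measurable_continuous_onI]) (intro continuous_intros)
  moreover have "indicator {0..2*pi::real} \<in> borel_measurable lebesgue"
    by (rule borel_measurable_indicator) simp
  ultimately show ?thesis by (intro measurable_compose[OF _ measurable_ennreal] borel_measurable_times) auto
qed

lemma ennreal_2sum: "0 \<le> (a::real) \<Longrightarrow> 0 \<le> b \<Longrightarrow> ennreal (2 * a + 2 * b) = 2 * ennreal a + 2 * ennreal b"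
  by (metis ennreal_mult'' ennreal_numeral ennreal_plus mult_nonneg_nonneg zero_le_numeral)

lemma Qn_add:
  assumes f: "f \<in> borel_measurable lebesgue" and g: "g \<in> borel_measurable lebesgue"
  shows "Qn (\<lambda>t. f t + g t) \<le> 2 * Qn f + 2 * Qn g"
proof -
  have "Qn (\<lambda>t. f t + g t) \<le> (\<integral>\<^sup>+ t. 2 * ennreal (indicator {0..2*pi} t * (cmod (f t))^2) +
      2 * ennreal (indicator {0..2*pi} t * (cmod (g t))^2) \<partial>lebesgue)"
    unfolding Qn_def
  proof (rule nn_integral_mono)
    fix t
    have "cmod (f t + g t) \<le> cmod (f t) + cmod (g t)" by (rule norm_triangle_ineq)
    then have "(cmod (f t + g t))^2 \<le> (cmod (f t) + cmod (g t))^2" by (intro power_mono) auto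
    also have "\<dots> \<le> 2 * (cmod (f t))^2 + 2 * (cmod (g t))^2"
      using sum_squares_bound[of "cmod (f t)" "cmod (g t)"] by (simp add: power2_sum)
    finally have *: "(cmod (f t + g t))^2 \<le> 2 * (cmod (f t))^2 + 2 * (cmod (g t))^2" .
    have "indicator {0..2*pi} t * (cmod (f t + g t))^2 \<le>
      2 * (indicator {0..2*pi} t * (cmod (f t))^2) + 2 * (indicator {0..2*pi} t * (cmod (g t))^2)"
      using * by (cases "t \<in> {0..2*pi}") auto
    then have "ennreal (indicator {0..2*pi} t * (cmod (f t + g t))^2) \<le>
      ennreal (2 * (indicator {0..2*pi} t * (cmod (f t))^2) + 2 * (indicator {0..2*pi} t * (cmod (g t))^2))"
      by (rule ennreal_leI)
    also have "\<dots> = 2 * ennreal (indicator {0..2*pi} t * (cmod (f t))^2) +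
      2 * ennreal (indicator {0..2*pi} t * (cmod (g t))^2)"
      by (rule ennreal_2sum) auto
    finally show "ennreal (indicator {0..2*pi} t * (cmod (f t + g t))^2) \<le>
      2 * ennreal (indicator {0..2*pi} t * (cmod (f t))^2) +
      2 * ennreal (indicator {0..2*pi} t * (cmod (g t))^2)" .
  qed
  also have "\<dots> = 2 * Qn f + 2 * Qn g"
    unfolding Qn_def using Qn_meas[OF f] Qn_meas[OF g]
    by (simp add: nn_integral_add nn_integral_cmult)
  finally show ?thesis .
qed

lemma Qn_diff3:
  assumes "f \<in> borel_measurable lebesgue" "g \<in> borel_measurable lebesgue" "h \<in> borel_measurable lebesgue"
  shows "Qn (\<lambda>t. f t - h t) \<le> 2 * Qn (\<lambda>t. f t - g t) + 2 * Qn (\<lambda>t. g t - h t)"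
proof -
  have "Qn (\<lambda>t. f t - h t) = Qn (\<lambda>t. (f t - g t) + (g t - h t))" by simp
  also have "\<dots> \<le> 2 * Qn (\<lambda>t. f t - g t) + 2 * Qn (\<lambda>t. g t - h t)"
    using assms by (intro Qn_add) auto
  finally show ?thesis .
qed

lemma Qn_cmult:
  assumes "f \<in> borel_measurable lebesgue"
  shows "Qn (\<lambda>t. c * f t) = ennreal ((cmod c)^2) * Qn f"
proof -
  have "Qn (\<lambda>t. c * f t) = (\<integral>\<^sup>+ t. ennreal ((cmod c)^2) * ennreal (indicator {0..2*pi} t * (cmod (f t))^2) \<partial>lebesgue)"
    unfolding Qn_def by (intro nn_integral_cong) (simp add: ennreal_mult[symmetric] norm_mult power_mult_distrib mult_ac)
  also have "\<dots> = ennreal ((cmod c)^2) * Qn f"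
    unfolding Qn_def using Qn_meas[OF assms] by (simp add: nn_integral_cmult)
  finally show ?thesis .
qed

lemma Qn_bound:
  assumes "\<And>t. t \<in> {0..2*pi} \<Longrightarrow> cmod (f t) \<le> c"
  shows "Qn f \<le> ennreal (2 * pi * c^2)"
proof -
  have "Qn f \<le> (\<integral>\<^sup>+ t. ennreal (c^2) * indicator {0..2*pi} t \<partial>lebesgue)"
    unfolding Qn_def
  proof (rule nn_integral_mono)
    fix t show "ennreal (indicator {0..2*pi} t * (cmod (f t))^2) \<le> ennreal (c^2) * indicator {0..2*pi} t"
      using assms[of t] by (cases "t \<in> {0..2*pi}") (auto intro!: ennreal_leI power_mono)
  qed
  also have "\<dots> = ennreal (c^2) * emeasure lebesgue {0..2*pi}" by (simp add: nn_integral_cmult_indicator)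
  also have "\<dots> = ennreal (2 * pi * c^2)" by (simp add: ennreal_mult[symmetric] mult.commute)
  finally show ?thesis .
qed

lemma Arg2pi_cis: "0 \<le> t \<Longrightarrow> t < 2*pi \<Longrightarrow> Arg2pi (cis t) = t"
  by (rule Arg2pi_unique[of 1]) (auto simp: cis_conv_exp)

lemma cis_Arg2pi: "cmod z = 1 \<Longrightarrow> cis (Arg2pi z) = z"
proof -
  assume z: "cmod z = 1"
  have "is_Arg z (Arg2pi z)" using Arg2pi by blast
  then show ?thesis using z by (simp add: is_Arg_def cis_conv_exp)
qed

lemma f_Arg2pi_cis:
  assumes "t \<in> {0..2*pi}" "f 0 = f (2*pi)"
  shows "f (Arg2pi (cis t)) = f t"
proof (cases "t = 2*pi")
  case True then show ?thesis using assms Arg2pi_of_real[of 1] by simp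
next
  case False then show ?thesis using assms by (simp add: Arg2pi_cis)
qed

lemma circle_cont:
  fixes f :: "real \<Rightarrow> real"
  assumes cf: "continuous_on {0..2*pi} f" and f0: "f 0 = f (2*pi)"
  shows "continuous_on (sphere 0 1) (\<lambda>z. f (Arg2pi z))"
proof -
  let ?X = "top_of_set {0..2*pi::real}" and ?Y = "top_of_set (sphere (0::complex) 1)"
  have cm: "continuous_map ?X ?Y cis"
    by (auto simp: continuous_map_in_subtopology intro: continuous_intros)
  have cs: "compact_space ?X" by (simp add: compact_space_subtopology compactin_subtopology)
  have hs: "Hausdorff_space ?Y" by (simp add: Hausdorff_space_subtopology)
  have im: "cis ` topspace ?X = topspace ?Y"
  proof
    show "cis ` topspace ?X \<subseteq> topspace ?Y" by auto
    show "topspace ?Y \<subseteq> cis ` topspace ?X"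
    proof
      fix z assume "z \<in> topspace ?Y"
      then have z: "cmod z = 1" by simp
      have "Arg2pi z \<in> {0..2*pi}" using Arg2pi[of z] by auto
      then show "z \<in> cis ` topspace ?X" using cis_Arg2pi[OF z] by force
    qed
  qed
  have q: "quotient_map ?X ?Y cis" using continuous_imp_quotient_map[OF cm cs hs im] .
  have "continuous_map ?X euclideanreal ((\<lambda>z. f (Arg2pi z)) \<circ> cis)"
  proof (rule continuous_map_eq)
    show "continuous_map ?X euclideanreal f" using cf by simp
    fix t assume "t \<in> topspace ?X"
    then show "f t = ((\<lambda>z. f (Arg2pi z)) \<circ> cis) t" using f_Arg2pi_cis[OF _ f0] by simp
  qed
  then have "continuous_map ?Y euclideanreal (\<lambda>z. f (Arg2pi z))"
    by (rule continuous_compose_quotient_map[OF q])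
  then show ?thesis by simp
qed

lemma Qn_cong: "(\<And>t. t \<in> {0..2*pi} \<Longrightarrow> f t = g t) \<Longrightarrow> Qn f = Qn g"
  unfolding Qn_def by (intro nn_integral_cong) (auto simp: indicator_def)

lemma set_approx:
  assumes B: "B \<in> sets lebesgue" and dl: "\<delta> > 0"
  shows "\<exists>\<psi>. continuous_on (sphere 0 1) \<psi> \<and>
    Qn (\<lambda>t. complex_of_real (indicator B t) - \<psi> (cis t)) < ennreal \<delta>"
proof -
  define d where "d = min 1 (\<delta>/8)"
  have d0: "0 < d" "d \<le> 1" "d \<le> \<delta>/8" using dl by (auto simp: d_def)
  have dpi: "d < pi" using d0 pi_gt3 by linarith
  define B1 where "B1 = B \<inter> {d..2*pi-d}"
  have B1: "B1 \<in> sets lebesgue" using B unfolding B1_def by (intro sets.Int) auto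
  have d8: "\<delta>/8 > 0" using dl by simp
  obtain C where C: "closed C" "C \<subseteq> B1" "emeasure lebesgue (B1 - C) < ennreal (\<delta>/8)"
    using sets_lebesgue_inner_closed[OF B1 d8] by metis
  obtain U where U: "open U" "B1 \<subseteq> U" "emeasure lebesgue (U - B1) < ennreal (\<delta>/8)"
    using sets_lebesgue_outer_open[OF B1 d8] by metis
  define U' where "U' = U \<inter> {d/2<..<2*pi-d/2}"
  have oU': "open U'" using U(1) by (auto simp: U'_def)
  have CU': "C \<inter> - U' = {}" using C(2) U(2) d0 by (auto simp: U'_def B1_def)
  obtain f :: "real \<Rightarrow> real" where cf: "continuous_on UNIV f"
    and fr: "\<And>x. f x \<in> closed_segment 1 0"
    and f1: "\<And>x. x \<in> C \<Longrightarrow> f x = 1" and f0: "\<And>x. x \<in> - U' \<Longrightarrow> f x = 0"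
    using Urysohn[OF C(1) _ CU', of 1 0] oU' by (metis closed_Compl)
  have fr': "0 \<le> f x \<and> f x \<le> 1" for x using fr[of x] by (simp add: closed_segment_eq_real_ivl)
  have fends: "f 0 = f (2*pi)" using f0[of 0] f0[of "2*pi"] d0 by (auto simp: U'_def)
  define \<psi> where "\<psi> = (\<lambda>z. complex_of_real (f (Arg2pi z)))"
  have cpsi: "continuous_on (sphere 0 1) \<psi>"
    unfolding \<psi>_def
    by (intro continuous_intros circle_cont[OF _ fends] continuous_on_subset[OF cf]) auto
  define E where "E = {0..d} \<union> {2*pi-d..2*pi}"
  have E: "E \<in> sets lebesgue" by (simp add: E_def)
  have Um: "U \<in> sets lebesgue" using U(1) by (simp add: borel_open)
  have Cm: "C \<in> sets lebesgue" using C(1) by (simp add: borel_closed)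
  have UC: "U - C \<in> sets lebesgue" using Um Cm by auto
  have "Qn (\<lambda>t. complex_of_real (indicator B t) - \<psi> (cis t)) \<le>
      (\<integral>\<^sup>+ t. indicator E t + indicator (U - C) t \<partial>lebesgue)"
    unfolding Qn_def
  proof (rule nn_integral_mono)
    fix t
    show "ennreal (indicator {0..2*pi} t * (cmod (complex_of_real (indicator B t) - \<psi> (cis t)))^2)
          \<le> indicator E t + indicator (U - C) t"
    proof (cases "t \<in> {0..2*pi}")
      case False then show ?thesis by simp
    next
      case True
      have ps: "\<psi> (cis t) = complex_of_real (f t)"
        unfolding \<psi>_def using f_Arg2pi_cis[OF True fends] by simp
      have "(indicator B t - f t)^2 \<le> indicator E t + indicator (U - C) t"
      proof (cases "t \<in> C")
        case True
        then show ?thesis using f1[OF True] C(2) by (auto simp: B1_def indicator_def)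
      next
        case nC: False
        show ?thesis
        proof (cases "t \<in> U")
          case True
          have "(indicator B t - f t)^2 \<le> (1::real)"
            using fr'[of t] by (auto simp: indicator_def power2_eq_square mult_le_one)
          then show ?thesis using True nC by (auto simp: indicator_def)
        next
          case nU: False
          then have "f t = 0" using f0 by (auto simp: U'_def)
          show ?thesis
          proof (cases "t \<in> B")
            case True
            then have "t \<notin> {d..2*pi-d}" using nU U(2) by (auto simp: B1_def)
            then have "t \<in> E" using \<open>t \<in> {0..2*pi}\<close> by (auto simp: E_def)
            then show ?thesis using \<open>f t = 0\<close> True by (auto simp: indicator_def)
          next
            case False
            then show ?thesis using \<open>f t = 0\<close> by (auto simp: indicator_def)
          qed
        qed
      qed
      then have "ennreal (indicator {0..2*pi} t * (cmod (complex_of_real (indicator B t) - \<psi> (cis t)))^2)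
          \<le> ennreal (indicator E t + indicator (U - C) t)"
        using True ps by (intro ennreal_leI) (simp flip: of_real_diff)
      also have "\<dots> = indicator E t + indicator (U - C) t"
        by (simp add: ennreal_plus ennreal_indicator)
      finally show ?thesis .
    qed
  qed
  also have "\<dots> = emeasure lebesgue E + emeasure lebesgue (U - C)"
    using E UC by (simp add: nn_integral_add)
  finally have Q1: "Qn (\<lambda>t. complex_of_real (indicator B t) - \<psi> (cis t)) \<le>
      emeasure lebesgue E + emeasure lebesgue (U - C)" .
  have e1: "emeasure lebesgue E \<le> ennreal d + ennreal d"
  proof -
    have "emeasure lebesgue E \<le> emeasure lebesgue {0..d} + emeasure lebesgue {2*pi-d..2*pi}"
      unfolding E_def by (rule emeasure_subadditive) auto
    then show ?thesis using d0 dpi by simp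
  qed
  have e2: "emeasure lebesgue (U - C) \<le> ennreal (\<delta>/8) + ennreal (\<delta>/8)"
  proof -
    have "emeasure lebesgue (U - C) \<le> emeasure lebesgue ((U - B1) \<union> (B1 - C))"
      by (rule emeasure_mono) (use Um Cm B1 in auto)
    also have "\<dots> \<le> emeasure lebesgue (U - B1) + emeasure lebesgue (B1 - C)"
      by (rule emeasure_subadditive) (use Um Cm B1 in auto)
    also have "\<dots> \<le> ennreal (\<delta>/8) + ennreal (\<delta>/8)"
      using U(3) C(3) by (intro add_mono) auto
    finally show ?thesis .
  qed
  have "emeasure lebesgue E + emeasure lebesgue (U - C) \<le>
      ennreal d + ennreal d + (ennreal (\<delta>/8) + ennreal (\<delta>/8))"
    using e1 e2 by (rule add_mono)
  also have "\<dots> = ennreal (2*d + \<delta>/4)"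
    using d0 dl by (simp add: ennreal_plus[symmetric] del: ennreal_plus)
  also have "\<dots> < ennreal \<delta>" using d0 dl by (intro ennreal_lessI) auto
  finally have "Qn (\<lambda>t. complex_of_real (indicator B t) - \<psi> (cis t)) < ennreal \<delta>"
    using Q1 by (rule order.strict_trans1[rotated])
  then show ?thesis using cpsi by (intro exI[of _ \<psi>]) simp
qed

lemma contsph_meas: "continuous_on (sphere 0 1) \<psi> \<Longrightarrow> (\<lambda>t. \<psi> (cis t)) \<in> borel_measurable lebesgue"
  by (intro cont_meas_leb continuous_on_compose2[of "sphere 0 1" \<psi> UNIV cis]) (auto intro: continuous_intros)

lemma ind_meas: "B \<in> sets lebesgue \<Longrightarrow> (\<lambda>t. complex_of_real (indicator B t)) \<in> borel_measurable lebesgue"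
  by (intro measurable_compose[OF borel_measurable_indicator borel_measurable_continuous_onI]) (auto intro: continuous_intros)

lemma simple_approx:
  assumes "finite R" "\<forall>y\<in>R. B y \<in> sets lebesgue" "\<delta> > 0"
  shows "\<exists>\<psi>. continuous_on (sphere 0 1) \<psi> \<and>
    Qn (\<lambda>t. (\<Sum>y\<in>R. c y * complex_of_real (indicator (B y) t)) - \<psi> (cis t)) < ennreal \<delta>"
  using assms
proof (induction R arbitrary: \<delta> rule: finite_induct)
  case empty
  have "Qn (\<lambda>t. 0) = 0" by (simp add: Qn_def)
  then show ?case using empty by (intro exI[of _ "\<lambda>z. 0"]) auto
next
  case (insert y R)
  have d8: "\<delta>/8 > 0" using insert by simp
  obtain \<psi>1 where c1: "continuous_on (sphere 0 1) \<psi>1"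
    and q1: "Qn (\<lambda>t. (\<Sum>y\<in>R. c y * complex_of_real (indicator (B y) t)) - \<psi>1 (cis t)) < ennreal (\<delta>/8)"
    using insert.IH[OF _ d8] insert.prems by auto
  define K where "K = (cmod (c y))^2"
  have K0: "K \<ge> 0" by (simp add: K_def)
  have d2: "\<delta> / (4 * (K + 1)) > 0" using insert K0 by simp
  obtain \<psi>2 where c2: "continuous_on (sphere 0 1) \<psi>2"
    and q2: "Qn (\<lambda>t. complex_of_real (indicator (B y) t) - \<psi>2 (cis t)) < ennreal (\<delta> / (4 * (K + 1)))"
    using set_approx[OF _ d2, of "B y"] insert.prems by auto
  define S where "S = (\<lambda>t. (\<Sum>y\<in>R. c y * complex_of_real (indicator (B y) t)))"
  define I where "I = (\<lambda>t. complex_of_real (indicator (B y) t))"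
  have mS: "S \<in> borel_measurable lebesgue" unfolding S_def using insert.prems
    by (intro borel_measurable_sum borel_measurable_times borel_measurable_const ind_meas) auto
  have mI: "I \<in> borel_measurable lebesgue" unfolding I_def using insert.prems by (intro ind_meas) auto
  have m1: "(\<lambda>t. \<psi>1 (cis t)) \<in> borel_measurable lebesgue" using c1 by (rule contsph_meas)
  have m2: "(\<lambda>t. \<psi>2 (cis t)) \<in> borel_measurable lebesgue" using c2 by (rule contsph_meas)
  define \<psi> where "\<psi> = (\<lambda>z. c y * \<psi>2 z + \<psi>1 z)"
  have cpsi: "continuous_on (sphere 0 1) \<psi>" unfolding \<psi>_def using c1 c2 by (intro continuous_intros)
  have "Qn (\<lambda>t. (\<Sum>y\<in>insert y R. c y * complex_of_real (indicator (B y) t)) - \<psi> (cis t)) =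
        Qn (\<lambda>t. c y * (I t - \<psi>2 (cis t)) + (S t - \<psi>1 (cis t)))"
    using insert by (intro Qn_cong) (simp add: S_def I_def \<psi>_def algebra_simps)
  also have "\<dots> \<le> 2 * Qn (\<lambda>t. c y * (I t - \<psi>2 (cis t))) + 2 * Qn (\<lambda>t. S t - \<psi>1 (cis t))"
    using mS mI m1 m2 by (intro Qn_add) auto
  also have "Qn (\<lambda>t. c y * (I t - \<psi>2 (cis t))) = ennreal K * Qn (\<lambda>t. I t - \<psi>2 (cis t))"
    unfolding K_def using mI m2 by (intro Qn_cmult) auto
  also have "2 * (ennreal K * Qn (\<lambda>t. I t - \<psi>2 (cis t))) \<le> 2 * (ennreal K * ennreal (\<delta> / (4 * (K + 1))))"
    using q2 unfolding I_def by (intro mult_left_mono) auto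
  also have "2 * Qn (\<lambda>t. S t - \<psi>1 (cis t)) \<le> 2 * ennreal (\<delta>/8)"
    using q1 unfolding S_def by (intro mult_left_mono) auto
  also have "2 * (ennreal K * ennreal (\<delta> / (4 * (K + 1)))) + 2 * ennreal (\<delta>/8) =
      ennreal (2 * (K * (\<delta> / (4 * (K + 1)))) + 2 * (\<delta>/8))"
  proof -
    have X0: "0 \<le> \<delta> / (4 * (K + 1))" using K0 insert.prems by simp
    have b0: "0 \<le> \<delta> / 8" using insert.prems by simp
    show ?thesis
      by (simp only: ennreal_mult[OF K0 X0] ennreal_2sum[OF mult_nonneg_nonneg[OF K0 X0] b0])
  qed
  also have "\<dots> < ennreal \<delta>"
  proof (intro ennreal_lessI)
    have "K * (\<delta> / (4 * (K + 1))) \<le> \<delta> / 4"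
      using K0 insert.prems by (simp add: field_simps)
    then show "2 * (K * (\<delta> / (4 * (K + 1)))) + 2 * (\<delta> / 8) < \<delta>" using insert.prems by simp
  qed (use insert.prems in auto)
  finally show ?case using cpsi by (intro exI[of _ \<psi>]) simp
qed

lemma bdd_approx:
  assumes m\<phi>: "\<phi> \<in> borel_measurable lebesgue" and bd: "\<And>t. cmod (\<phi> t) \<le> M" and dl: "\<delta> > 0"
  shows "\<exists>\<psi>. continuous_on (sphere 0 1) \<psi> \<and> Qn (\<lambda>t. \<phi> t - \<psi> (cis t)) < ennreal \<delta>"
proof -
  have M0: "M \<ge> 0" using bd[of 0] norm_ge_zero[of "\<phi> 0"] by linarith
  define \<phi>' where "\<phi>' = (\<lambda>t. indicator {0..2*pi} t *\<^sub>R \<phi> t)"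
  have i\<phi>: "integrable lebesgue \<phi>'"
  proof (rule Bochner_Integration.integrable_bound)
    show "integrable lebesgue (\<lambda>t. indicator {0..2*pi} t *\<^sub>R M)"
      using absolutely_integrable_continuous_real[of 0 "2*pi" "\<lambda>t. M"]
      by (simp add: set_integrable_def)
    show "\<phi>' \<in> borel_measurable lebesgue" unfolding \<phi>'_def using m\<phi>
      by (intro borel_measurable_scaleR borel_measurable_indicator) auto
    show "AE x in lebesgue. norm (\<phi>' x) \<le> norm (indicator {0..2*pi} x *\<^sub>R M)"
      using bd M0 by (intro AE_I2) (auto simp: \<phi>'_def indicator_def)
  qed
  then obtain x where "has_bochner_integral lebesgue \<phi>' x" by (auto simp: integrable.simps)
  then obtain s where sb: "\<And>i. Bochner_Integration.simple_bochner_integrable lebesgue (s i)"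
    and sl: "(\<lambda>i. \<integral>\<^sup>+ x. ennreal (norm (\<phi>' x - s i x)) \<partial>lebesgue) \<longlonglongrightarrow> 0"
    by (auto simp: has_bochner_integral.simps)
  define \<eta> where "\<eta> = \<delta> / (12 * (M + 1))"
  have \<eta>0: "\<eta> > 0" using dl M0 by (simp add: \<eta>_def)
  have "eventually (\<lambda>i. (\<integral>\<^sup>+ x. ennreal (norm (\<phi>' x - s i x)) \<partial>lebesgue) < ennreal \<eta>) sequentially"
    using order_tendstoD(2)[OF sl] \<eta>0 by simp
  then obtain i where si: "(\<integral>\<^sup>+ x. ennreal (norm (\<phi>' x - s i x)) \<partial>lebesgue) < ennreal \<eta>"
    by (auto simp: eventually_sequentially)
  define \<sigma> where "\<sigma> = s i"
  have s\<sigma>: "simple_function lebesgue \<sigma>" using sb[of i] by (simp add: \<sigma>_def Bochner_Integration.simple_bochner_integrable.simps)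
  define \<sigma>' where "\<sigma>' = (\<lambda>x. if cmod x \<le> 2*M then x else 0) \<circ> \<sigma>"
  have s\<sigma>': "simple_function lebesgue \<sigma>'" unfolding \<sigma>'_def using s\<sigma> by (rule simple_function_compose)
  have m\<sigma>': "\<sigma>' \<in> borel_measurable lebesgue" using s\<sigma>' by (rule borel_measurable_simple_function)
  have pt: "(cmod (\<phi> t - \<sigma>' t))^2 \<le> 3 * M * norm (\<phi> t - \<sigma> t)" for t
  proof -
    have a: "cmod (\<phi> t - \<sigma>' t) \<le> 3 * M" and b: "cmod (\<phi> t - \<sigma>' t) \<le> norm (\<phi> t - \<sigma> t)"
    proof -
      have "cmod (\<phi> t - \<sigma>' t) \<le> 3 * M \<and> cmod (\<phi> t - \<sigma>' t) \<le> norm (\<phi> t - \<sigma> t)"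
      proof (cases "cmod (\<sigma> t) \<le> 2*M")
        case True
        then have "\<sigma>' t = \<sigma> t" by (simp add: \<sigma>'_def)
        moreover have "cmod (\<phi> t - \<sigma> t) \<le> cmod (\<phi> t) + cmod (\<sigma> t)" by (rule norm_triangle_ineq4)
        ultimately show ?thesis using True bd[of t] by simp
      next
        case False
        then have "\<sigma>' t = 0" by (simp add: \<sigma>'_def)
        moreover have "cmod (\<sigma> t) - cmod (\<phi> t) \<le> cmod (\<sigma> t - \<phi> t)" by (rule norm_triangle_ineq2)
        ultimately show ?thesis using False bd[of t] M0 by (simp add: norm_minus_commute)
      qed
      then show "cmod (\<phi> t - \<sigma>' t) \<le> 3 * M" "cmod (\<phi> t - \<sigma>' t) \<le> norm (\<phi> t - \<sigma> t)" by auto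
    qed
    have "(cmod (\<phi> t - \<sigma>' t))^2 = cmod (\<phi> t - \<sigma>' t) * cmod (\<phi> t - \<sigma>' t)" by (simp add: power2_eq_square)
    also have "\<dots> \<le> 3 * M * norm (\<phi> t - \<sigma> t)" using a b M0 by (intro mult_mono) auto
    finally show ?thesis .
  qed
  have q1: "Qn (\<lambda>t. \<phi> t - \<sigma>' t) \<le> ennreal (\<delta>/4)"
  proof -
    have "Qn (\<lambda>t. \<phi> t - \<sigma>' t) \<le> (\<integral>\<^sup>+ x. ennreal (3 * M) * ennreal (norm (\<phi>' x - \<sigma> x)) \<partial>lebesgue)"
      unfolding Qn_def
    proof (rule nn_integral_mono)
      fix t
      show "ennreal (indicator {0..2*pi} t * (cmod (\<phi> t - \<sigma>' t))^2) \<le>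
            ennreal (3 * M) * ennreal (norm (\<phi>' t - \<sigma> t))"
      proof (cases "t \<in> {0..2*pi}")
        case True
        then have "ennreal (indicator {0..2*pi} t * (cmod (\<phi> t - \<sigma>' t))^2) \<le>
            ennreal (3 * M * norm (\<phi>' t - \<sigma> t))"
          using pt[of t] by (intro ennreal_leI) (simp add: \<phi>'_def)
        also have "\<dots> = ennreal (3 * M) * ennreal (norm (\<phi>' t - \<sigma> t))"
          using M0 by (intro ennreal_mult) auto
        finally show ?thesis .
      qed simp
    qed
    also have "\<dots> = ennreal (3 * M) * (\<integral>\<^sup>+ x. ennreal (norm (\<phi>' x - \<sigma> x)) \<partial>lebesgue)"
    proof (rule nn_integral_cmult)
      have "\<phi>' \<in> borel_measurable lebesgue" using i\<phi> by auto
      moreover have "\<sigma> \<in> borel_measurable lebesgue" using s\<sigma> by (rule borel_measurable_simple_function)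
      ultimately show "(\<lambda>x. ennreal (norm (\<phi>' x - \<sigma> x))) \<in> borel_measurable lebesgue" by measurable
    qed
    also have "\<dots> \<le> ennreal (3 * M) * ennreal \<eta>"
      using si by (intro mult_left_mono) (auto simp: \<sigma>_def)
    also have "\<dots> = ennreal (3 * M * \<eta>)" using M0 \<eta>0 by (simp add: ennreal_mult)
    also have "\<dots> \<le> ennreal (\<delta>/4)"
    proof (rule ennreal_leI)
      have "3 * M * \<eta> = \<delta> / 4 * (M / (M + 1))" using M0 by (simp add: \<eta>_def field_simps)
      also have "\<dots> \<le> \<delta> / 4 * 1" using M0 dl by (intro mult_left_mono) auto
      finally show "3 * M * \<eta> \<le> \<delta> / 4" by simp
    qed
    finally show ?thesis .
  qed
  define R where "R = \<sigma>' ` space lebesgue"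
  have fR: "finite R" unfolding R_def using s\<sigma>' by (rule simple_functionD)
  have rep: "\<sigma>' t = (\<Sum>y\<in>R. y * complex_of_real (indicator (\<sigma>' -` {y} \<inter> space lebesgue) t))" for t
  proof -
    have "\<sigma>' t = (\<Sum>y\<in>\<sigma>' ` space lebesgue. indicator (\<sigma>' -` {y} \<inter> space lebesgue) t *\<^sub>R y)"
      by (rule simple_function_indicator_representation_banach[OF s\<sigma>']) simp
    also have "\<dots> = (\<Sum>y\<in>R. y * complex_of_real (indicator (\<sigma>' -` {y} \<inter> space lebesgue) t))"
      unfolding R_def by (intro sum.cong refl) (simp add: scaleR_conv_of_real)
    finally show ?thesis .
  qed
  have d16: "\<delta>/16 > 0" using dl by simp
  have "\<forall>y\<in>R. \<sigma>' -` {y} \<inter> space lebesgue \<in> sets lebesgue"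
    using simple_functionD(2)[OF s\<sigma>'] by blast
  then have "\<exists>\<psi>. continuous_on (sphere 0 1) \<psi> \<and>
    Qn (\<lambda>t. (\<Sum>y\<in>R. y * complex_of_real (indicator (\<sigma>' -` {y} \<inter> space lebesgue) t)) - \<psi> (cis t))
       < ennreal (\<delta>/16)"
    by (rule simple_approx[OF fR _ d16])
  then obtain \<psi> where c\<psi>: "continuous_on (sphere 0 1) \<psi>"
    and q2: "Qn (\<lambda>t. (\<Sum>y\<in>R. y * complex_of_real (indicator (\<sigma>' -` {y} \<inter> space lebesgue) t)) - \<psi> (cis t))
       < ennreal (\<delta>/16)" by blast
  have eq: "(\<lambda>t. (\<Sum>y\<in>R. y * complex_of_real (indicator (\<sigma>' -` {y} \<inter> space lebesgue) t)) - \<psi> (cis t))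
     = (\<lambda>t. \<sigma>' t - \<psi> (cis t))" by (simp only: rep[symmetric])
  have q2': "Qn (\<lambda>t. \<sigma>' t - \<psi> (cis t)) \<le> ennreal (\<delta>/16)"
    using q2 unfolding eq by (rule less_imp_le)
  have "Qn (\<lambda>t. \<phi> t - \<psi> (cis t)) \<le> 2 * Qn (\<lambda>t. \<phi> t - \<sigma>' t) + 2 * Qn (\<lambda>t. \<sigma>' t - \<psi> (cis t))"
    using m\<phi> m\<sigma>' contsph_meas[OF c\<psi>] by (rule Qn_diff3)
  also have "\<dots> \<le> 2 * ennreal (\<delta>/4) + 2 * ennreal (\<delta>/16)"
    using q1 q2' by (intro add_mono mult_left_mono) auto
  also have "\<dots> = ennreal (2 * (\<delta>/4) + 2 * (\<delta>/16))"
    using dl by (intro ennreal_2sum[symmetric]) auto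
  also have "\<dots> < ennreal \<delta>" using dl by (intro ennreal_lessI) auto
  finally show ?thesis using c\<psi> by (intro exI[of _ \<psi>]) simp
qed

lemma trunc_approx:
  assumes L: "L2T F" and e: "\<epsilon> > 0"
  shows "\<exists>M::nat. Qn (\<lambda>t. F (cis t) - (if cmod (F (cis t)) \<le> real M then F (cis t) else 0)) < ennreal \<epsilon>"
proof -
  define f where "f = (\<lambda>t. F (cis t))"
  have mf[measurable]: "f \<in> borel_measurable lebesgue" using L by (simp add: L2T_def f_def)
  have mf2[measurable]: "(\<lambda>t. (cmod (f t))^2) \<in> borel_measurable lebesgue"
    by (rule measurable_compose[OF mf borel_measurable_continuous_onI]) (intro continuous_intros)
  have mfn[measurable]: "(\<lambda>t. cmod (f t)) \<in> borel_measurable lebesgue"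
    by (rule measurable_compose[OF mf borel_measurable_continuous_onI]) (intro continuous_intros)
  have mI[measurable]: "indicator {0..2*pi::real} \<in> borel_measurable lebesgue"
    by (rule borel_measurable_indicator) simp
  define w where "w = (\<lambda>t. indicator {0..2*pi} t * (cmod (f t))^2 :: real)"
  define u where "u = (\<lambda>(i::nat) t. indicator {0..2*pi} t * (if cmod (f t) \<le> real i then (cmod (f t))^2 else 0) :: real)"
  have iw: "integrable lebesgue w" using L2T_sq_int[OF L] by (simp add: set_integrable_def w_def f_def)
  have mw[measurable]: "w \<in> borel_measurable lebesgue" using iw by auto
  have mu[measurable]: "u i \<in> borel_measurable lebesgue" for i
    unfolding u_def by measurable
  have "(\<lambda>i. (\<integral>\<^sup>+x. norm (w x - u i x) \<partial>lebesgue)) \<longlonglongrightarrow> 0"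
  proof (rule nn_integral_dominated_convergence_norm[where w = w])
    show "AE x in lebesgue. norm (u j x) \<le> w x" for j
      by (intro AE_I2) (auto simp: u_def w_def indicator_def)
    have "(\<integral>\<^sup>+x. ennreal (w x) \<partial>lebesgue) = ennreal (integral\<^sup>L lebesgue w)"
      using iw by (intro nn_integral_eq_integral) (auto simp: w_def)
    then show "(\<integral>\<^sup>+x. ennreal (w x) \<partial>lebesgue) < \<infinity>" by simp
    show "AE x in lebesgue. (\<lambda>i. u i x) \<longlonglongrightarrow> w x"
    proof (intro AE_I2 tendsto_eventually)
      fix x
      show "eventually (\<lambda>i. u i x = w x) sequentially"
        unfolding eventually_sequentially
      proof (rule exI[of _ "nat \<lceil>cmod (f x)\<rceil>"], intro allI impI)
        fix i assume "nat \<lceil>cmod (f x)\<rceil> \<le> i"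
        then have "real (nat \<lceil>cmod (f x)\<rceil>) \<le> real i" by (simp only: of_nat_le_iff)
        then have "cmod (f x) \<le> real i" using real_nat_ceiling_ge[of "cmod (f x)"] by linarith
        then show "u i x = w x" by (simp add: u_def w_def)
      qed
    qed
  qed auto
  then have "eventually (\<lambda>i. (\<integral>\<^sup>+x. norm (w x - u i x) \<partial>lebesgue) < ennreal \<epsilon>) sequentially"
    using e by (intro order_tendstoD(2)) auto
  then obtain M where M: "(\<integral>\<^sup>+x. norm (w x - u M x) \<partial>lebesgue) < ennreal \<epsilon>"
    by (auto simp: eventually_sequentially)
  have "Qn (\<lambda>t. F (cis t) - (if cmod (F (cis t)) \<le> real M then F (cis t) else 0)) =
        (\<integral>\<^sup>+x. norm (w x - u M x) \<partial>lebesgue)"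
    unfolding Qn_def by (intro nn_integral_cong) (auto simp: u_def w_def f_def indicator_def)
  then show ?thesis using M by (intro exI[of _ M]) simp
qed

lemma dens2:
  assumes L: "L2T F" and e: "\<epsilon> > 0"
  shows "\<exists>p. tp p \<and> nsq (\<lambda>z. F z - p z) < \<epsilon>"
proof -
  define f where "f = (\<lambda>t. F (cis t))"
  have mf[measurable]: "f \<in> borel_measurable lebesgue" using L by (simp add: L2T_def f_def)
  have mfn[measurable]: "(\<lambda>t. cmod (f t)) \<in> borel_measurable lebesgue"
    by (rule measurable_compose[OF mf borel_measurable_continuous_onI]) (intro continuous_intros)
  have e16: "\<epsilon>/16 > 0" using e by simp
  obtain M :: nat where qA: "Qn (\<lambda>t. F (cis t) - (if cmod (F (cis t)) \<le> real M then F (cis t) else 0)) < ennreal (\<epsilon>/16)"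
    using trunc_approx[OF L e16] by blast
  define \<phi> where "\<phi> = (\<lambda>t. if cmod (f t) \<le> real M then f t else 0)"
  have m\<phi>: "\<phi> \<in> borel_measurable lebesgue" unfolding \<phi>_def by measurable
  have b\<phi>: "cmod (\<phi> t) \<le> real M" for t by (simp add: \<phi>_def)
  obtain \<psi> where c\<psi>: "continuous_on (sphere 0 1) \<psi>" and qB: "Qn (\<lambda>t. \<phi> t - \<psi> (cis t)) < ennreal (\<epsilon>/16)"
    using bdd_approx[OF m\<phi> b\<phi> e16] by blast
  define \<eta> where "\<eta> = min 1 (\<epsilon> / (32 * pi))"
  have \<eta>0: "\<eta> > 0" using e by (simp add: \<eta>_def)
  obtain g where pg: "polynomial_function g" and gb: "\<forall>x\<in>sphere 0 1. norm (\<psi> x - g x) < \<eta>"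
    using Stone_Weierstrass_polynomial_function[OF compact_sphere c\<psi> \<eta>0] by blast
  have tg: "tp g" using pg by (rule tp_poly_fun)
  have gL: "L2T g" using tg by (rule tp_L2T)
  have qC: "Qn (\<lambda>t. \<psi> (cis t) - g (cis t)) \<le> ennreal (\<epsilon>/16)"
  proof -
    have "Qn (\<lambda>t. \<psi> (cis t) - g (cis t)) \<le> ennreal (2 * pi * \<eta>^2)"
      by (rule Qn_bound) (use gb in \<open>auto intro: less_imp_le\<close>)
    also have "\<dots> \<le> ennreal (\<epsilon>/16)"
    proof (rule ennreal_leI)
      have "\<eta> \<le> 1" by (simp add: \<eta>_def)
      then have "\<eta> * \<eta> \<le> \<eta> * 1" using \<eta>0 by (intro mult_left_mono) auto
      then have "\<eta>^2 \<le> \<eta>" by (simp add: power2_eq_square)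
      then have "2 * pi * \<eta>^2 \<le> 2 * pi * \<eta>" by (intro mult_left_mono) auto
      also have "\<dots> \<le> 2 * pi * (\<epsilon> / (32 * pi))" by (intro mult_left_mono) (auto simp: \<eta>_def)
      also have "\<dots> = \<epsilon>/16" by simp
      finally show "2 * pi * \<eta>^2 \<le> \<epsilon>/16" .
    qed
    finally show ?thesis .
  qed
  have mpsi: "(\<lambda>t. \<psi> (cis t)) \<in> borel_measurable lebesgue" using c\<psi> by (rule contsph_meas)
  have mg: "(\<lambda>t. g (cis t)) \<in> borel_measurable lebesgue" using meas_L2T[OF gL] by (simp add: meas_def)
  have A: "Qn (\<lambda>t. f t - \<phi> t) \<le> ennreal (\<epsilon>/16)" using qA unfolding f_def \<phi>_def by (rule less_imp_le)
  have B: "Qn (\<lambda>t. \<phi> t - \<psi> (cis t)) \<le> ennreal (\<epsilon>/16)" using qB by (rule less_imp_le)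
  have a0: "0 \<le> \<epsilon>/16" using e by simp
  have D1: "Qn (\<lambda>t. \<phi> t - g (cis t)) \<le> ennreal (2 * (\<epsilon>/16) + 2 * (\<epsilon>/16))"
  proof -
    have "Qn (\<lambda>t. \<phi> t - g (cis t)) \<le> 2 * Qn (\<lambda>t. \<phi> t - \<psi> (cis t)) + 2 * Qn (\<lambda>t. \<psi> (cis t) - g (cis t))"
      using m\<phi> mpsi mg by (rule Qn_diff3)
    also have "\<dots> \<le> 2 * ennreal (\<epsilon>/16) + 2 * ennreal (\<epsilon>/16)"
      using B qC by (intro add_mono mult_left_mono) auto
    also have "\<dots> = ennreal (2 * (\<epsilon>/16) + 2 * (\<epsilon>/16))"
      by (rule ennreal_2sum[symmetric]) (use a0 in auto)
    finally show ?thesis .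
  qed
  have "Qn (\<lambda>t. f t - g (cis t)) \<le> 2 * Qn (\<lambda>t. f t - \<phi> t) + 2 * Qn (\<lambda>t. \<phi> t - g (cis t))"
    using mf m\<phi> mg by (rule Qn_diff3)
  also have "\<dots> \<le> 2 * ennreal (\<epsilon>/16) + 2 * ennreal (2 * (\<epsilon>/16) + 2 * (\<epsilon>/16))"
    using A D1 by (intro add_mono mult_left_mono) auto
  also have "\<dots> = ennreal (2 * (\<epsilon>/16) + 2 * (2 * (\<epsilon>/16) + 2 * (\<epsilon>/16)))"
    by (rule ennreal_2sum[symmetric]) (use a0 in auto)
  also have "\<dots> < ennreal \<epsilon>" using e by (intro ennreal_lessI) auto
  finally have "Qn (\<lambda>t. f t - g (cis t)) < ennreal \<epsilon>" .
  moreover have "Qn (\<lambda>t. f t - g (cis t)) = ennreal (nsq (\<lambda>z. F z - g z))"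
    using Qn_nsq[OF L2T_diff[OF L gL]] by (simp add: f_def)
  ultimately have "nsq (\<lambda>z. F z - g z) < \<epsilon>" using e nsq_nonneg[of "\<lambda>z. F z - g z"] by (simp add: ennreal_less_iff)
  then show ?thesis using tg by blast
qed

lemma dens:
  assumes "L2T F" "\<epsilon> > 0"
  shows "\<exists>p. tp p \<and> nsq (\<lambda>z. F z - p z) < \<epsilon>"
  by (rule dens2[OF assms])

lemma fc_cnj: "fourier_coeff (\<lambda>z. cnj (G z)) m = cnj (fourier_coeff G (-m))"
proof -
  have "fourier_coeff (\<lambda>z. cnj (G z)) m = ipL2 (\<lambda>z. z powi (-m)) G"
    unfolding fourier_coeff_def by (rule ipL2_circ_cong) (simp add: cnj_circle power_int_inverse power_int_minus mult.commute)
  then show ?thesis by (simp add: fourier_coeff_def ipL2_cnj[of _ G])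
qed

lemma fc_powi: "fourier_coeff (\<lambda>z. z powi m) n = (if m = n then 1 else 0)"
  by (simp add: fourier_coeff_def ipL2_powi)

lemma nsq_cnj: "nsq (\<lambda>z. cnj (G z)) = nsq G"
  by (simp add: nsq_def)

lemma key:
  assumes FH: "F \<in> H2" and GH: "G \<in> H2" and F0: "val0 F = 0"
  shows "ipL2 F (\<lambda>z. cnj (G z)) = 0"
proof -
  have FL: "L2T F" and GL: "L2T G" and GcL: "L2T (\<lambda>z. cnj (G z))"
    using FH GH by (auto intro: H2_L2T)
  have bound: "cmod (ipL2 F (\<lambda>z. cnj (G z))) \<le> \<eta>" if eta: "\<eta> > 0" for \<eta>
  proof -
    define s where "s = (nsq G + 1) / \<eta>"
    have s0: "s > 0" using eta nsq_nonneg[of G] by (simp add: s_def)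
    obtain p where tpp: "tp p" and pD: "nsq (\<lambda>z. F z - p z) < \<eta> / (s + 1)"
      using dens[OF FL, of "\<eta> / (s+1)"] eta s0 by auto
    obtain S :: "nat set" and a e where fS: "finite S"
      and pS: "\<And>z. cmod z = 1 \<Longrightarrow> p z = (\<Sum>i\<in>S. a i * z powi e i)"
      using tp_sum[OF tpp] by blast
    define Sm where "Sm = {i\<in>S. e i \<le> 0}"
    define Sp where "Sp = {i\<in>S. e i > 0}"
    have fSm: "finite Sm" and fSp: "finite Sp" using fS by (auto simp: Sm_def Sp_def)
    define q where "q = (\<lambda>z. \<Sum>i\<in>Sm. a i * z powi e i)"
    define r where "r = (\<lambda>z. \<Sum>i\<in>Sp. a i * z powi e i)"
    define D where "D = (\<lambda>z. F z - p z)"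
    have qL: "L2T q" and rL: "L2T r" unfolding q_def r_def using fSm fSp by (auto intro: L2T_sum)
    have pL: "L2T p" using tpp by (rule tp_L2T)
    have DL: "L2T D" unfolding D_def using FL pL by auto
    have pqr: "p z = q z + r z" if "cmod z = 1" for z
    proof -
      have "S = Sm \<union> Sp" "Sm \<inter> Sp = {}" by (auto simp: Sm_def Sp_def)
      then show ?thesis using pS[OF that] fSm fSp by (simp add: q_def r_def sum.union_disjoint)
    qed
    have FDqr: "F z = D z + q z + r z" if "cmod z = 1" for z
      using pqr[OF that] by (simp add: D_def)
    have h1: "ipL2 q F = 0"
    proof -
      have "fourier_coeff F (e i) = 0" if "i \<in> Sm" for i
      proof (cases "e i = 0")
        case True then show ?thesis using F0 by (simp add: val0_def)
      next
        case False then show ?thesis using that FH by (auto simp: Sm_def H2_def)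
      qed
      then show ?thesis unfolding q_def by (simp add: ipL2_sum_left[OF fSm FL])
    qed
    have h2: "ipL2 q r = 0"
    proof -
      have "fourier_coeff r (e i) = 0" if "i \<in> Sm" for i
      proof -
        have "fourier_coeff r (e i) = ipL2 r (\<lambda>z. z powi e i)" by (simp add: fourier_coeff_def)
        also have "\<dots> = cnj (ipL2 (\<lambda>z. z powi e i) r)" by (rule ipL2_cnj)
        also have "ipL2 (\<lambda>z. z powi e i) r = (\<Sum>j\<in>Sp. cnj (a j) * ipL2 (\<lambda>z. z powi e i) (\<lambda>z. z powi e j))"
        proof -
          have "ipL2 r (\<lambda>z. z powi e i) = (\<Sum>j\<in>Sp. a j * cnj (fourier_coeff (\<lambda>z. z powi e i) (e j)))"
            unfolding r_def by (rule ipL2_sum_left[OF fSp L2T_powi])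
          also have "\<dots> = 0" using that by (auto simp: Sm_def Sp_def fc_powi intro!: sum.neutral)
          finally have "ipL2 r (\<lambda>z. z powi e i) = 0" .
          moreover have "(\<Sum>j\<in>Sp. cnj (a j) * ipL2 (\<lambda>z. z powi e i) (\<lambda>z. z powi e j)) = 0"
            using that by (auto simp: Sm_def Sp_def ipL2_powi intro!: sum.neutral)
          ultimately show ?thesis by (metis complex_cnj_zero ipL2_cnj)
        qed
        also have "\<dots> = 0" using that by (auto simp: Sm_def Sp_def ipL2_powi intro!: sum.neutral)
        finally show ?thesis by simp
      qed
      then show ?thesis unfolding q_def by (simp add: ipL2_sum_left[OF fSm rL])
    qed
    have h3: "ipL2 r (\<lambda>z. cnj (G z)) = 0"
    proof -
      have "fourier_coeff (\<lambda>z. cnj (G z)) (e j) = 0" if "j \<in> Sp" for j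
        using that GH by (auto simp: Sp_def fc_cnj H2_def)
      then show ?thesis unfolding r_def by (simp add: ipL2_sum_left[OF fSp GcL])
    qed
    have "ipL2 q F = ipL2 q (\<lambda>z. D z + q z + r z)"
      by (rule ipL2_circ_cong) (simp add: FDqr)
    also have "\<dots> = ipL2 q D + ipL2 q q + ipL2 q r"
      using qL rL DL by (simp add: ipL2_add_right L2T_add)
    finally have qqD: "ipL2 q q = - ipL2 q D" using h1 h2 by (simp add: add_eq_0_iff)
    have "nsq q / (2*pi) = cmod (ipL2 q q)"
      using nsq_nonneg[of q] unfolding ipL2_self[of q] norm_of_real by simp
    also have "\<dots> = cmod (ipL2 q D)" using qqD by simp
    also have "\<dots> \<le> (1 * nsq q + nsq D / 1) / (4*pi)" using ipL2_bound[OF qL DL, of 1] by simp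
    finally have "nsq q / (2*pi) \<le> (nsq q + nsq D) / (4*pi)" by simp
    then have nq: "nsq q \<le> nsq D" by (simp add: field_simps)
    have "ipL2 F (\<lambda>z. cnj (G z)) = ipL2 (\<lambda>z. D z + q z + r z) (\<lambda>z. cnj (G z))"
      by (rule ipL2_circ_cong) (simp add: FDqr)
    also have "\<dots> = ipL2 D (\<lambda>z. cnj (G z)) + ipL2 q (\<lambda>z. cnj (G z))"
      using qL rL DL GcL h3 by (simp add: ipL2_add_left L2T_add)
    finally have e: "ipL2 F (\<lambda>z. cnj (G z)) = ipL2 D (\<lambda>z. cnj (G z)) + ipL2 q (\<lambda>z. cnj (G z))" .
    have b1: "cmod (ipL2 D (\<lambda>z. cnj (G z))) \<le> (s * nsq D + nsq G / s) / (4*pi)"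
      using ipL2_bound[OF DL GcL s0] by (simp add: nsq_cnj)
    have b2: "cmod (ipL2 q (\<lambda>z. cnj (G z))) \<le> (s * nsq q + nsq G / s) / (4*pi)"
      using ipL2_bound[OF qL GcL s0] by (simp add: nsq_cnj)
    have nD: "nsq D < \<eta> / (s + 1)" using pD by (simp add: D_def)
    have "s * nsq D \<le> \<eta>"
    proof -
      have "s * nsq D \<le> s * (\<eta> / (s + 1))" using nD s0 by (intro mult_left_mono) auto
      also have "\<dots> \<le> \<eta>" using s0 eta by (simp add: field_simps)
      finally show ?thesis .
    qed
    moreover have "s * nsq q \<le> s * nsq D" using nq s0 by (intro mult_left_mono) auto
    moreover have "nsq G / s \<le> \<eta>"
      using eta nsq_nonneg[of G] by (simp add: s_def field_simps)
    ultimately have "(s*nsq D + nsq G/s) + (s*nsq q + nsq G/s) \<le> 4*\<eta>" by linarith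
    then have "((s*nsq D + nsq G/s) + (s*nsq q + nsq G/s)) / (4*pi) \<le> (4*\<eta>) / (4*pi)"
      by (intro divide_right_mono) auto
    then have "(s*nsq D + nsq G/s) / (4*pi) + (s*nsq q + nsq G/s) / (4*pi) \<le> (4*\<eta>) / (4*pi)"
      by (simp add: add_divide_distrib)
    then have "cmod (ipL2 F (\<lambda>z. cnj (G z))) \<le> (4 * \<eta>) / (4 * pi)"
      using b1 b2 norm_triangle_ineq[of "ipL2 D (\<lambda>z. cnj (G z))" "ipL2 q (\<lambda>z. cnj (G z))"]
      unfolding e by linarith
    also have "\<dots> \<le> \<eta>" using eta pi_gt3 by (simp add: field_simps)
    finally show ?thesis .
  qed
  have "cmod (ipL2 F (\<lambda>z. cnj (G z))) \<le> 0"
  proof (rule field_le_epsilon)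
    fix e :: real assume "0 < e"
    then show "cmod (ipL2 F (\<lambda>z. cnj (G z))) \<le> 0 + e" using bound by simp
  qed
  then show ?thesis by simp
qed

lemma one_Kmod:
  assumes "inner_fun \<theta>" "val0 \<theta> = 0"
  shows "(\<lambda>z. 1) \<in> Kmod \<theta>"
  unfolding Kmod_def
proof (intro CollectI conjI ballI H2_const)
  fix h assume h: "h \<in> H2"
  have "ipL2 (\<lambda>z. \<theta> z * h z) (\<lambda>z. 1) = ipL2 \<theta> (\<lambda>z. cnj (h z))"
    by (rule ipL2_circ_cong) simp
  also have "\<dots> = 0" using key[OF inner_H2[OF assms(1)] h assms(2)] .
  finally show "ipL2 (\<lambda>z. 1) (\<lambda>z. \<theta> z * h z) = 0"
    by (subst ipL2_cnj) simp
qed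

lemma meas_H2: "f \<in> H2 \<Longrightarrow> meas f" by (simp add: H2_L2T meas_L2T)

theorem theorem3p6:
  fixes \<theta> \<omega> g g1 :: "complex \<Rightarrow> complex" and c :: complex
  assumes "inner_fun \<theta>" and "inner_fun \<omega>"
    and "val0 \<theta> = 0" and "val0 \<omega> = 0"
    and "multiplier g \<theta> \<omega>"
    and "g1 \<in> H2" and "aeq g (\<lambda>z. \<omega> z * cnj (\<theta> z) * cnj (g1 z))"
    and "val0 g1 \<noteq> 0"
    and "cmod c = 1"
  defines "u \<equiv> (\<lambda>z. \<omega> z + (1 / cnj (val0 g1)) * (c - \<theta> z) * g z)"
  defines "X \<equiv> (\<lambda>f z. g z * f z)"
  defines "T \<equiv> (\<lambda>f z. Sc \<omega> f z + ipL2 f (\<lambda>w. cnj w * \<omega> w) * u z)"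
  shows "u \<in> Kmod \<omega> \<and> (\<forall>f\<in>Kmod \<theta>. aeq (X (Uc \<theta> c f)) (T (X f)))"
proof -
  note th = assms(1) and om = assms(2) and th0 = assms(3) and om0 = assms(4)
  note mult = assms(5) and g1H = assms(6) and gae = assms(7) and g10 = assms(8)
  have gH: "g \<in> H2" using mult by (simp add: multiplier_def)
  have gm: "\<And>f. f \<in> Kmod \<theta> \<Longrightarrow> (\<lambda>z. g z * f z) \<in> Kmod \<omega>"
    using mult by (simp add: multiplier_def)
  have thH: "\<theta> \<in> H2" and omH: "\<omega> \<in> H2" using th om by (auto intro: inner_H2)
  have thmeas: "meas \<theta>" and ommeas: "meas \<omega>" and gmeas: "meas g" and g1m: "meas g1"
    using thH omH gH g1H by (auto intro: meas_H2)
  define k where "k = 1 / cnj (val0 g1)"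
  have kk: "k * cnj (val0 g1) = 1" using g10 by (simp add: k_def)
  have gK: "g \<in> Kmod \<omega>" using gm[OF one_Kmod[OF th th0]] by simp
  have chiK: "(\<lambda>z. cnj z * \<theta> z) \<in> Kmod \<theta>" using th th0 by (rule chi_theta_K)
  have thgH: "(\<lambda>z. \<theta> z * g z) \<in> H2"
  proof (rule H2_circ_cong)
    show "(\<lambda>z. z * (g z * (cnj z * \<theta> z))) \<in> H2" using gm[OF chiK] by (intro H2_mult_z Kmod_H2)
    fix z :: complex assume "cmod z = 1"
    then have "z * cnj z = 1" using complex_norm_square[of z] by simp
    then show "z * (g z * (cnj z * \<theta> z)) = \<theta> z * g z" by (simp add: algebra_simps)
  qed
  have ae1: "circ_ae (\<lambda>z. cmod (\<theta> z) = 1 \<and> cmod (\<omega> z) = 1 \<and> g z = \<omega> z * cnj (\<theta> z) * cnj (g1 z))"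
    using circ_ae_conj[OF inner_mod[OF th] circ_ae_conj[OF inner_mod[OF om] gae[unfolded aeq_def]]] .
  have uu: "u = (\<lambda>z. \<omega> z + (k * c) * g z - k * (\<theta> z * g z))"
    using g10 by (simp add: u_def k_def fun_eq_iff field_simps)
  have uH: "u \<in> H2"
  proof -
    show ?thesis using uu using omH gH thgH
      by (simp only:) (intro H2_diff H2_add H2_cmult[of _ "k * c"] H2_cmult[of _ k])
  qed
  have uK: "u \<in> Kmod \<omega>"
    unfolding Kmod_def
  proof (intro CollectI conjI ballI uH)
    fix h assume h: "h \<in> H2"
    have hL: "L2T h" using h by (rule H2_L2T)
    have ohL: "L2T (\<lambda>z. \<omega> z * h z)" using om hL by (rule inner_L2T_mult)
    have i1: "ipL2 \<omega> (\<lambda>z. \<omega> z * h z) = cnj (val0 h)"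
      using inner_ip[OF om L2T_const[of 1] hL] ipL2_one_left[OF hL] by simp
    have i2: "ipL2 g (\<lambda>z. \<omega> z * h z) = 0" using Kmod_orth[OF gK h] .
    have "ipL2 (\<lambda>z. \<theta> z * g z) (\<lambda>z. \<omega> z * h z) = ipL2 (\<lambda>z. cnj (h z)) g1"
    proof (rule ipL2_ae_cong)
      show "meas (\<lambda>z. \<theta> z * g z)" "meas (\<lambda>z. \<omega> z * h z)" "meas (\<lambda>z. cnj (h z))" "meas g1"
        using thmeas gmeas ommeas g1m meas_H2[OF h] by auto
      show "circ_ae (\<lambda>z. \<theta> z * g z * cnj (\<omega> z * h z) = cnj (h z) * cnj (g1 z))"
        using ae1
      proof (rule circ_ae_mono)
        fix z assume a: "cmod (\<theta> z) = 1 \<and> cmod (\<omega> z) = 1 \<and> g z = \<omega> z * cnj (\<theta> z) * cnj (g1 z)"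
        then have e: "\<theta> z * cnj (\<theta> z) = 1" "\<omega> z * cnj (\<omega> z) = 1"
          using complex_norm_square[of "\<theta> z"] complex_norm_square[of "\<omega> z"] by auto
        have "\<theta> z * g z * cnj (\<omega> z * h z) =
          (\<theta> z * cnj (\<theta> z)) * (\<omega> z * cnj (\<omega> z)) * (cnj (h z) * cnj (g1 z))"
          using a by (simp add: mult_ac)
        then show "\<theta> z * g z * cnj (\<omega> z * h z) = cnj (h z) * cnj (g1 z)"
          using e by simp
      qed
    qed
    also have "\<dots> = cnj (ipL2 g1 (\<lambda>z. cnj (h z)))" by (rule ipL2_cnj)
    also have "ipL2 g1 (\<lambda>z. cnj (h z)) = ipL2 (\<lambda>z. (g1 z - val0 g1) + val0 g1 * 1) (\<lambda>z. cnj (h z))"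
      by simp
    also have "\<dots> = ipL2 (\<lambda>z. g1 z - val0 g1) (\<lambda>z. cnj (h z)) + val0 g1 * ipL2 (\<lambda>z. 1) (\<lambda>z. cnj (h z))"
      using g1H hL ipL2_cmult_left[of "val0 g1" "\<lambda>z. 1" "\<lambda>z. cnj (h z)"]
      by (subst ipL2_add_left) (auto intro: H2_L2T)
    also have "ipL2 (\<lambda>z. g1 z - val0 g1) (\<lambda>z. cnj (h z)) = 0"
      using key[OF H2_diff[OF g1H H2_const] h] by (simp add: val0_diff_const[OF g1H])
    also have "ipL2 (\<lambda>z. 1) (\<lambda>z. cnj (h z)) = ipL2 h (\<lambda>z. z powi 0)"
      by (rule ipL2_circ_cong) simp
    finally have i3: "ipL2 (\<lambda>z. \<theta> z * g z) (\<lambda>z. \<omega> z * h z) = cnj (val0 g1 * val0 h)"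
      by (simp add: val0_def fourier_coeff_def)
    have "ipL2 u (\<lambda>z. \<omega> z * h z) =
      ipL2 (\<lambda>z. \<omega> z + (k * c) * g z - k * (\<theta> z * g z)) (\<lambda>z. \<omega> z * h z)"
      by (simp add: uu)
    also have "\<dots> = ipL2 \<omega> (\<lambda>z. \<omega> z * h z) + (k * c) * ipL2 g (\<lambda>z. \<omega> z * h z)
        - k * ipL2 (\<lambda>z. \<theta> z * g z) (\<lambda>z. \<omega> z * h z)"
      using omH gH thgH ohL
      by (simp add: ipL2_diff_left ipL2_add_left ipL2_cmult_left H2_L2T L2T_cmult L2T_add)
    also have "\<dots> = 0" using i1 i2 i3 kk by (simp add: algebra_simps)
    finally show "ipL2 u (\<lambda>z. \<omega> z * h z) = 0" .
  qed
  have main: "aeq (X (Uc \<theta> c f)) (T (X f))" if f: "f \<in> Kmod \<theta>" for f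
  proof -
    define a where "a = ipL2 f (\<lambda>w. cnj w * \<theta> w)"
    define b where "b = ipL2 (\<lambda>z. g z * f z) (\<lambda>w. cnj w * \<omega> w)"
    have fL: "L2T f" using f by (rule Kmod_L2T)
    have gfK: "(\<lambda>z. g z * f z) \<in> Kmod \<omega>" using gm[OF f] .
    have s1: "aeq (Sc \<theta> f) (\<lambda>z. z * f z - a * \<theta> z)" using PK_shift(2)[OF th f] by (simp add: a_def)
    have s2: "aeq (Sc \<omega> (\<lambda>z. g z * f z)) (\<lambda>z. z * (g z * f z) - b * \<omega> z)"
      using PK_shift(2)[OF om gfK] by (simp add: b_def)
    have "b = ipL2 f (\<lambda>z. cnj z * \<theta> z * g1 z)"
      unfolding b_def
    proof (rule ipL2_ae_cong)
      show "meas (\<lambda>z. g z * f z)" "meas (\<lambda>w. cnj w * \<omega> w)" "meas f" "meas (\<lambda>z. cnj z * \<theta> z * g1 z)"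
        using thmeas gmeas ommeas g1m meas_L2T[OF fL] meas_cnj[OF meas_id] by auto
      show "circ_ae (\<lambda>z. g z * f z * cnj (cnj z * \<omega> z) = f z * cnj (cnj z * \<theta> z * g1 z))"
        using ae1
      proof (rule circ_ae_mono)
        fix z assume a: "cmod (\<theta> z) = 1 \<and> cmod (\<omega> z) = 1 \<and> g z = \<omega> z * cnj (\<theta> z) * cnj (g1 z)"
        then have e: "\<omega> z * cnj (\<omega> z) = 1"
          using complex_norm_square[of "\<omega> z"] by auto
        have "g z * f z * cnj (cnj z * \<omega> z) = (\<omega> z * cnj (\<omega> z)) * (f z * cnj (cnj z * \<theta> z * g1 z))"
          using a by (simp add: mult_ac)
        then show "g z * f z * cnj (cnj z * \<omega> z) = f z * cnj (cnj z * \<theta> z * g1 z)"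
          using e by simp
      qed
    qed
    also have "\<dots> = ipL2 f (\<lambda>z. \<theta> z * (cnj z * (g1 z - val0 g1)) + val0 g1 * (cnj z * \<theta> z))"
      by (rule ipL2_circ_cong) (simp add: algebra_simps)
    also have "\<dots> = ipL2 f (\<lambda>z. \<theta> z * (cnj z * (g1 z - val0 g1))) + cnj (val0 g1) * a"
      using fL thH g1H
      by (subst ipL2_add_right)
         (auto simp: ipL2_cmult_right a_def intro: inner_L2T_mult[OF th H2_L2T[OF H2_sub_shift]]
           L2T_cmult L2T_mult_cnjz[OF H2_L2T])
    also have "ipL2 f (\<lambda>z. \<theta> z * (cnj z * (g1 z - val0 g1))) = 0"
      using Kmod_orth[OF f H2_sub_shift[OF g1H]] .
    finally have ba: "b = cnj (val0 g1) * a" by simp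
    show ?thesis
      using circ_ae_conj[OF s1[unfolded aeq_def] s2[unfolded aeq_def]] unfolding aeq_def
    proof (rule circ_ae_mono)
      fix z
      assume e: "Sc \<theta> f z = z * f z - a * \<theta> z \<and>
                 Sc \<omega> (\<lambda>z. g z * f z) z = z * (g z * f z) - b * \<omega> z"
      have "X (Uc \<theta> c f) z = g z * (z * f z - a * \<theta> z + c * a)"
        using e by (simp add: X_def Uc_def a_def)
      also have "\<dots> = z * (g z * f z) + (b * k) * c * g z - (b * k) * \<theta> z * g z"
        using kk ba by (simp add: algebra_simps)
      also have "\<dots> = z * (g z * f z) - b * \<omega> z + b * u z"
        by (simp add: uu algebra_simps)
      also have "\<dots> = T (X f) z"
        using e by (simp add: T_def X_def b_def)
      finally show "X (Uc \<theta> c f) z = T (X f) z" .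
    qed
  qed
  show ?thesis using uK main by blast
qed


end
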